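(* Consider the linear structural equation model and the quantities defined in the context. Assume that Assumption A or Assumption A$'$ holds. Then the causal direction $\mathcal{H}$ is identifiable and $\mathcal{H}=\mathcal{H}^{\circ}$.
   Context: Observations $(X_i,Y_i,Z_i,U_i)$, $i=1,\dots,n$, are i.i.d.; $X_i,Y_i\in\mathbb{R}$ are observed with finite variance, $Z_i\in\mathbb{R}^p$ is an observed vector of candidate instruments, $U_i$ is unobserved. Assume $E(X_i)=E(Y_i)=0$, $E(Z_i)=0$, and $\Sigma=E(Z_iZ_i^{T})$ invertible. The data satisfy $$Y_i=\beta_{X\to Y}X_i+\pi_Y^{T}Z_i+\xi_Y(U_i)+\zeta_i,\qquad X_i=\beta_{Y\to X}Y_i+\pi_X^{T}Z_i+\xi_X(U_i)+\eta_i,$$ with $\pi_X,\pi_Y\in\mathbb{R}^p$, mean-zero functions $\xi_Y(U_i),\xi_X(U_i)$, $Z_i$ independent of $U_i$, and $E(\zeta_i\mid\eta_i,Z_i,U_i)=E(\eta_i\mid\zeta_i,Z_i,U_i)=0$. The matrix $B=\begin{pmatrix}0&\beta_{X\to Y}\\ \beta_{Y\to X}&0\end{pmatrix}$ has spectral norm $<1$, and $(Y_i,X_i)^T=(I-B)^{-1}\{(\pi_Y^TZ_i,\pi_X^TZ_i)^T+(R_{Y,i},R_{X,i})^T\}$ where $R_{Y,i}=\xi_Y(U_i)+\zeta_i$, $R_{X,i}=\xi_X(U_i)+\eta_i$. Then $E(Y_i\mid Z_i)=\gamma_Y^TZ_i$, $E(X_i\mid Z_i)=\gamma_X^TZ_i$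 with $\gamma_Y=(\pi_Y+\beta_{X\to Y}\pi_X)/(1-\beta_{X\to Y}\beta_{Y\to X})$, $\gamma_X=(\pi_X+\beta_{Y\to X}\pi_Y)/(1-\beta_{X\to Y}\beta_{Y\to X})$. Sets: $\mathcal{V}_{X\to Y}=\{j:\pi_{X,j}\neq0,\pi_{Y,j}=0\}$, $\mathcal{V}_{Y\to X}=\{j:\pi_{Y,j}\neq0,\pi_{X,j}=0\}$, $\mathcal{V}_{pl}=\{j:\pi_{X,j}\neq0,\pi_{Y,j}\neq0\}$, $\mathcal{S}_X=\{j:\gamma_{X,j}\neq0\}$, $\mathcal{S}_Y=\{j:\gamma_{Y,j}\neq0\}$. Maxima over empty collections are $0$; $\mathbb{1}$ is the indicator. Assumption A: $|\mathcal{V}_{X\to Y}|>\max\big(\max_c|\{j\in\mathcal{V}_{pl}\cap\mathcal{S}_X:\pi_{Y,j}/\gamma_{X,j}=c\}|,\ |\mathcal{V}_{Y\to X}|\mathbb{1}(\beta_{Y\to X}\neq0),\ |\mathcal{V}_{pl}\setminus\mathcal{S}_X|\mathbb{1}(\beta_{Y\to X}\neq0)\big)$, and $\mathrm{Cov}(Y_iR_{Y,i},Z_i)\neq0$. Assumption A$'$: $|\mathcal{V}_{Y\to X}|>\max\big(\max_c|\{j\in\mathcal{V}_{pl}\cap\mathcal{S}_Y:\pi_{X,j}/\gamma_{Y,j}=c\}|,\ |\mathcal{V}_{X\to Y}|\mathbb{1}(\beta_{X\to Y}\neq0),\ |\mathcal{V}_{pl}\setminus\mathcal{S}_Y|\mathbb{1}(\beta_{X\to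 Y}\neq0)\big)$, and $\mathrm{Cov}(X_iR_{X,i},Z_i)\neq0$. Oracle PCH: for an ordered pair $(D,D')\in\{(X,Y),(Y,X)\}$ define $\mathrm{oPCH}(D,D')=(\beta^\star_{D\to D'},\beta^\star_{D'\to D},\mathcal{V}^\star_{D\to D'})$ as follows. Consider $\arg\max_{b\in\mathbb{R}}|\{j\in\mathcal{S}_D:\gamma_{D',j}/\gamma_{D,j}=b\}|$. If it has more than one element, set $\beta^\star_{D\to D'}=\infty$ and $\mathcal{V}^\star_{D\to D'}=\emptyset$ (and then $\beta^\star_{D'\to D}=\infty$). If it has a unique element $b$, set $\beta^\star_{D\to D'}=b$ and $\mathcal{V}^\star_{D\to D'}=\{j\in\mathcal{S}_D:\gamma_{D',j}/\gamma_{D,j}=b\}$; then let $\bar D'=D'-\beta^\star_{D\to D'}D$, $\Lambda=\bar D'-E(\bar D'\mid Z)$, $\theta_D=\Sigma^{-1}E(\Lambda_iD_iZ_i)$, $\theta_{D'}=\Sigma^{-1}E(\Lambda_iD'_iZ_i)$, and set $\beta^\star_{D'\to D}=(\theta_D^T\Sigma\theta_{D'})/(\theta_{D'}^T\Sigma\theta_{D'})$ if $\theta_{D'}^T\Sigma\theta_{D'}\neq0$ and $\beta^\star_{D'\to D}=\infty$ otherwise. Define $(\beta_{X\to Y,\mathrm{I}},\beta_{Y\to X,\mathrm{I}},\mathcal{V}_{X\to Y,\mathrm{I}})=\mathrm{oPCH}(X,Y)$ and $(\beta_{Y\to X,\mathrm{II}},\beta_{X\to Y,\mathrm{II}},\mathcal{V}_{Y\to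 X,\mathrm{II}})=\mathrm{oPCH}(Y,X)$, and $\mathbf{b}=(\beta_{X\to Y,\mathrm{I}},\beta_{Y\to X,\mathrm{I}},\beta_{X\to Y,\mathrm{II}},\beta_{Y\to X,\mathrm{II}})^T$. Define $(\beta^\circ_{X\to Y},\beta^\circ_{Y\to X})$ to be: $(\beta_{X\to Y,\mathrm{I}},\beta_{Y\to X,\mathrm{I}})$ if $\max(\beta_{X\to Y,\mathrm{II}},\beta_{Y\to X,\mathrm{II}})=\infty$; $(\beta_{X\to Y,\mathrm{II}},\beta_{Y\to X,\mathrm{II}})$ if $\max(\beta_{X\to Y,\mathrm{I}},\beta_{Y\to X,\mathrm{I}})=\infty$; $(\beta_{X\to Y,\mathrm{I}},\beta_{Y\to X,\mathrm{I}})$ if $|\mathcal{V}_{X\to Y,\mathrm{I}}|\ge|\mathcal{V}_{Y\to X,\mathrm{II}}|$ and $\max(\mathbf{b})<\infty$; $(\beta_{X\to Y,\mathrm{II}},\beta_{Y\to X,\mathrm{II}})$ if $|\mathcal{V}_{X\to Y,\mathrm{I}}|<|\mathcal{V}_{Y\to X,\mathrm{II}}|$ and $\max(\mathbf{b})<\infty$. True causal direction: $\mathcal{H}=2$ if $\beta_{X\to Y}\beta_{Y\to X}\neq0$; $\mathcal{H}=1$ if $\beta_{X\to Y}\neq0,\beta_{Y\to X}=0$; $\mathcal{H}=0$ if $\beta_{X\to Y}=\beta_{Y\to X}=0$; $\mathcal{H}=-1$ if $\beta_{X\to Y}=0,\beta_{Y\to X}\neq0$. Population statistic: $\mathcal{H}^\circ=2$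 if $\min_{j\le4}|\mathbf{b}_j|>0$; $\mathcal{H}^\circ=1$ if $\beta^\circ_{X\to Y}\neq0,\beta^\circ_{Y\to X}=0$; $\mathcal{H}^\circ=0$ if $\beta^\circ_{X\to Y}=\beta^\circ_{Y\to X}=0$; $\mathcal{H}^\circ=-1$ if $\beta^\circ_{X\to Y}=0,\beta^\circ_{Y\to X}\neq0$. *)

theory Defs
  imports "HOL-Probability.Probability"
begin

definition Sig :: "'a measure \<Rightarrow> ('a \<Rightarrow> real^'p) \<Rightarrow> real^'p^'p" where
  "Sig M Z = (\<chi> j k. integral\<^sup>L M (\<lambda>w. Z w $ j * Z w $ k))"

definition cexpZ :: "'a measure \<Rightarrow> ('a \<Rightarrow> real^'p) \<Rightarrow> ('a \<Rightarrow> real) \<Rightarrow> 'a \<Rightarrow> real" where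
  "cexpZ M Z f = real_cond_exp M (vimage_algebra (space M) Z borel) f"

definition supp_set :: "real^'p \<Rightarrow> 'p set" where
  "supp_set g = {j. g $ j \<noteq> 0}"

definition ratio_set :: "real^'p \<Rightarrow> real^'p \<Rightarrow> real \<Rightarrow> 'p set" where
  "ratio_set gD gD' b = {j \<in> supp_set gD. gD' $ j / gD $ j = b}"

definition mode_set :: "real^'p \<Rightarrow> real^'p \<Rightarrow> real set" where
  "mode_set gD gD' = {b. \<forall>c. card (ratio_set gD gD' c) \<le> card (ratio_set gD gD' b)}"

(* Oracle PCH: oPCH(D,D') = (beta*_{D->D'}, beta*_{D'->D}, V*_{D->D'}); infinity = PInfty *)
definition oPCH :: "'a measure \<Rightarrow> ('a \<Rightarrow> real^'p) \<Rightarrow> ('a \<Rightarrow> real) \<Rightarrow> ('a \<Rightarrow> real)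
    \<Rightarrow> real^'p \<Rightarrow> real^'p \<Rightarrow> ereal \<times> ereal \<times> 'p set" where
  "oPCH M Z D D' gD gD' =
     (if \<exists>!b. b \<in> mode_set gD gD' then
        (let b = (THE b. b \<in> mode_set gD gD');
             Dbar = (\<lambda>w. D' w - b * D w);
             Lam = (\<lambda>w. Dbar w - cexpZ M Z Dbar w);
             S = Sig M Z;
             thD = matrix_inv S *v (\<chi> j. integral\<^sup>L M (\<lambda>w. Lam w * D w * Z w $ j));
             thD' = matrix_inv S *v (\<chi> j. integral\<^sup>L M (\<lambda>w. Lam w * D' w * Z w $ j));
             den = thD' \<bullet> (S *v thD')
         in (ereal b,
             (if den \<noteq> 0 then ereal ((thD \<bullet> (S *v thD')) / den) else PInfty),
             ratio_set gD gD' b))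
      else (PInfty, PInfty, {}))"

(* (beta^circ_{X->Y}, beta^circ_{Y->X}); the first listed applicable case is taken *)
definition beta_circ :: "ereal \<Rightarrow> ereal \<Rightarrow> 'p set \<Rightarrow> ereal \<Rightarrow> ereal \<Rightarrow> 'p set \<Rightarrow> ereal \<times> ereal" where
  "beta_circ bXY_I bYX_I V_I bXY_II bYX_II V_II =
     (if max bXY_II bYX_II = \<infinity> then (bXY_I, bYX_I)
      else if max bXY_I bYX_I = \<infinity> then (bXY_II, bYX_II)
      else if card V_I \<ge> card V_II then (bXY_I, bYX_I)
      else (bXY_II, bYX_II))"

(* Population statistic H^circ; None if no case of the definition applies *)
definition H_circ :: "ereal \<Rightarrow> ereal \<Rightarrow> ereal \<Rightarrow> ereal \<Rightarrow> 'p set \<Rightarrow> 'p set \<Rightarrow> int option" where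
  "H_circ bXY_I bYX_I bXY_II bYX_II V_I V_II =
     (let (bX, bY) = beta_circ bXY_I bYX_I V_I bXY_II bYX_II V_II in
      if Min {\<bar>bXY_I\<bar>, \<bar>bYX_I\<bar>, \<bar>bXY_II\<bar>, \<bar>bYX_II\<bar>} > 0 then Some 2
      else if bX \<noteq> 0 \<and> bY = 0 then Some 1
      else if bX = 0 \<and> bY = 0 then Some 0
      else if bX = 0 \<and> bY \<noteq> 0 then Some (-1)
      else None)"

definition H_true :: "real \<Rightarrow> real \<Rightarrow> int" where
  "H_true bXY bYX =
     (if bXY * bYX \<noteq> 0 then 2
      else if bXY \<noteq> 0 \<and> bYX = 0 then 1
      else if bXY = 0 \<and> bYX = 0 then 0
      else -1)"

definition Bmat :: "real \<Rightarrow> real \<Rightarrow> real^2^2" where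
  "Bmat bXY bYX = vector [vector [0, bXY], vector [bYX, 0]]"

(* gamma_Y and gamma_X from the reduced form *)
definition gammaY :: "real \<Rightarrow> real \<Rightarrow> real^'p \<Rightarrow> real^'p \<Rightarrow> real^'p" where
  "gammaY bXY bYX piX piY = (1 / (1 - bXY * bYX)) *\<^sub>R (piY + bXY *\<^sub>R piX)"
definition gammaX :: "real \<Rightarrow> real \<Rightarrow> real^'p \<Rightarrow> real^'p \<Rightarrow> real^'p" where
  "gammaX bXY bYX piX piY = (1 / (1 - bXY * bYX)) *\<^sub>R (piX + bYX *\<^sub>R piY)"

(* Assumption A (with roles of (X,Y) parameters); A' is obtained by swapping *)
definition assmA :: "'a measure \<Rightarrow> ('a \<Rightarrow> real^'p) \<Rightarrow> ('a \<Rightarrow> real) \<Rightarrow> ('a \<Rightarrow> real)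
    \<Rightarrow> real \<Rightarrow> real^'p \<Rightarrow> real^'p \<Rightarrow> real^'p \<Rightarrow> bool" where
  "assmA M Z Y RY bYX piX piY gX \<longleftrightarrow>
     (let VXY = {j. piX $ j \<noteq> 0 \<and> piY $ j = 0};
          VYX = {j. piY $ j \<noteq> 0 \<and> piX $ j = 0};
          Vpl = {j. piX $ j \<noteq> 0 \<and> piY $ j \<noteq> 0};
          SX = supp_set gX
      in card VXY > max (Max (range (\<lambda>c. card {j \<in> Vpl \<inter> SX. piY $ j / gX $ j = c})))
                        (max (if bYX \<noteq> 0 then card VYX else 0)
                             (if bYX \<noteq> 0 then card (Vpl - SX) else 0))
       \<and> (\<chi> j. integral\<^sup>L M (\<lambda>w. Y w * RY w * Z w $ j)
                 - integral\<^sup>L M (\<lambda>w. Y w * RY w) * integral\<^sup>L M (\<lambda>w. Z w $ j)) \<noteq> 0)"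

end

theory Submission
  imports Defs
begin

lemma vimage_sfs:
  assumes "prob_space M" "f \<in> measurable M N"
  shows "sigma_finite_subalgebra M (vimage_algebra (space M) f N)"
proof -
  interpret prob_space M by fact
  have fs: "f \<in> space M \<rightarrow> space N" using assms(2) by (simp add: measurable_def)
  have "subalgebra M (vimage_algebra (space M) f N)"
    unfolding subalgebra_def using assms(2) by (auto simp: sets_vimage_algebra2[OF fs])
  then have "finite_measure_subalgebra M (vimage_algebra (space M) f N)"
    by unfold_locales
  then show ?thesis by (rule finite_measure_subalgebra_is_sigma_finite)
qed

lemma vimage_meas:
  assumes "f \<in> measurable M N" "g \<in> borel_measurable N"
  shows "(\<lambda>x. g (f x)) \<in> borel_measurable (vimage_algebra (space M) f N)"
proof -
  have fs: "f \<in> space M \<rightarrow> space N" using assms(1) by (simp add: measurable_def)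
  show ?thesis using measurable_comp[OF measurable_vimage_algebra1[OF fs] assms(2)] by (simp add: comp_def)
qed

lemma le_abs_aux: "\<bar>p::real\<bar> \<le> 1 \<Longrightarrow> p * y \<le> \<bar>y\<bar>"
proof -
  assume "\<bar>p\<bar> \<le> 1"
  have "p * y \<le> \<bar>p * y\<bar>" by simp
  also have "\<dots> = \<bar>p\<bar> * \<bar>y\<bar>" by (simp add: abs_mult)
  also have "\<dots> \<le> \<bar>y\<bar>" using \<open>\<bar>p\<bar> \<le> 1\<close> by (simp add: mult_left_le_one_le)
  finally show ?thesis .
qed

lemma peel:
  fixes a h e :: "'a \<Rightarrow> real"
  assumes sfs: "sigma_finite_subalgebra M F"
    and e: "integrable M e" and ce: "AE w in M. real_cond_exp M F e w = 0"
    and aF: "a \<in> borel_measurable F" and hF: "h \<in> borel_measurable F"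
    and int: "integrable M (\<lambda>w. a w + h w * e w)"
  shows "integrable M a" "integrable M (\<lambda>w. h w * e w)" "(\<integral>w. h w * e w \<partial>M) = 0"
proof -
  interpret sigma_finite_subalgebra M F by fact
  have aM[measurable]: "a \<in> borel_measurable M" by (rule measurable_from_subalg[OF subalg aF])
  have hM[measurable]: "h \<in> borel_measurable M" by (rule measurable_from_subalg[OF subalg hF])
  have eM[measurable]: "e \<in> borel_measurable M" using e by auto
  have zero: "(\<integral>w. k w * e w \<partial>M) = 0" if kF: "k \<in> borel_measurable F" and ki: "integrable M (\<lambda>w. k w * e w)" for k
  proof -
    have "(\<integral>w. k w * e w \<partial>M) = (\<integral>w. k w * real_cond_exp M F e w \<partial>M)"
      using real_cond_exp_intg(2)[OF ki kF eM] by simp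
    also have "\<dots> = (\<integral>w. 0 \<partial>M)"
      using measurable_from_subalg[OF subalg kF] by (intro integral_cong_AE) (use ce in auto)
    finally show ?thesis by simp
  qed
  define phi where "phi n w = (if \<bar>h w\<bar> \<le> real n then sgn (a w) else 0)" for n w
  have phiF: "phi n \<in> borel_measurable F" for n unfolding phi_def using aF hF by measurable
  have phiM[measurable]: "phi n \<in> borel_measurable M" for n unfolding phi_def by measurable
  have phib: "\<bar>phi n w\<bar> \<le> 1" for n w unfolding phi_def by (auto simp: sgn_real_def)
  have phih: "\<bar>phi n w * h w\<bar> \<le> real n" for n w unfolding phi_def by (auto simp: sgn_real_def abs_mult)
  have i1: "integrable M (\<lambda>w. (phi n w * h w) * e w)" for n
  proof (rule Bochner_Integration.integrable_bound[where f="\<lambda>w. real n * e w"])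
    show "integrable M (\<lambda>w. real n * e w)" using e by simp
    show "AE x in M. norm (phi n x * h x * e x) \<le> norm (real n * e x)"
      using phih by (auto simp: abs_mult intro!: mult_right_mono)
  qed measurable
  have z1: "(\<integral>w. (phi n w * h w) * e w \<partial>M) = 0" for n
    by (rule zero) (use phiF hF i1 in auto)
  have i2: "integrable M (\<lambda>w. phi n w * (a w + h w * e w))" for n
  proof (rule Bochner_Integration.integrable_bound[where f="\<lambda>w. a w + h w * e w"])
    show "AE x in M. norm (phi n x * (a x + h x * e x)) \<le> norm (a x + h x * e x)"
      using phib by (auto simp: abs_mult intro!: mult_left_le_one_le)
  qed (use int in measurable)
  have eq: "phi n w * a w = phi n w * (a w + h w * e w) - (phi n w * h w) * e w" for n w
    by (simp add: algebra_simps)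
  have i3: "integrable M (\<lambda>w. phi n w * a w)" for n
    unfolding eq using i1 i2 by auto
  have v3: "(\<integral>w. phi n w * a w \<partial>M) \<le> (\<integral>w. \<bar>a w + h w * e w\<bar> \<partial>M)" for n
  proof -
    have "(\<integral>w. phi n w * a w \<partial>M) = (\<integral>w. phi n w * (a w + h w * e w) \<partial>M)"
      unfolding eq using i1 i2 z1 by (subst Bochner_Integration.integral_diff) auto
    also have "\<dots> \<le> (\<integral>w. \<bar>a w + h w * e w\<bar> \<partial>M)"
      using i2 int phib by (intro integral_mono) (auto intro!: le_abs_aux)
    finally show ?thesis .
  qed
  have pos: "0 \<le> phi n w * a w" for n w unfolding phi_def by (auto simp: sgn_real_def mult_less_0_iff)
  have nn: "(\<integral>\<^sup>+w. ennreal (phi n w * a w) \<partial>M) \<le> ennreal (\<integral>w. \<bar>a w + h w * e w\<bar> \<partial>M)" for n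
    using nn_integral_eq_integral[OF i3 ] pos v3 by (simp add: ennreal_leI)
  have lim: "(\<integral>\<^sup>+w. ennreal (\<bar>a w\<bar>) \<partial>M) = (SUP n. \<integral>\<^sup>+w. ennreal (phi n w * a w) \<partial>M)"
  proof -
    have "(\<integral>\<^sup>+w. ennreal (\<bar>a w\<bar>) \<partial>M) = (\<integral>\<^sup>+w. (SUP n. ennreal (phi n w * a w)) \<partial>M)"
    proof (rule nn_integral_cong)
      fix w
      have "(SUP n. ennreal (phi n w * a w)) = ennreal \<bar>a w\<bar>"
      proof (rule antisym)
        show "(SUP n. ennreal (phi n w * a w)) \<le> ennreal \<bar>a w\<bar>"
          by (rule SUP_least) (auto simp: phi_def sgn_real_def intro!: ennreal_leI)
        obtain n where "\<bar>h w\<bar> \<le> real n" using real_arch_simple by blast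
        then have "phi n w * a w = \<bar>a w\<bar>" by (auto simp: phi_def sgn_real_def)
        then show "ennreal \<bar>a w\<bar> \<le> (SUP n. ennreal (phi n w * a w))"
          by (metis SUP_upper UNIV_I)
      qed
      then show "ennreal \<bar>a w\<bar> = (SUP n. ennreal (phi n w * a w))" by simp
    qed
    also have "\<dots> = (SUP n. \<integral>\<^sup>+w. ennreal (phi n w * a w) \<partial>M)"
    proof (rule nn_integral_monotone_convergence_SUP)
      show "incseq (\<lambda>n w. ennreal (phi n w * a w))"
        by (auto simp: incseq_def le_fun_def phi_def sgn_real_def intro!: ennreal_leI)
    qed measurable
    finally show ?thesis .
  qed
  have "(\<integral>\<^sup>+w. ennreal (\<bar>a w\<bar>) \<partial>M) \<le> ennreal (\<integral>w. \<bar>a w + h w * e w\<bar> \<partial>M)"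
    unfolding lim by (rule SUP_least) (rule nn)
  also have "\<dots> < \<infinity>" by simp
  finally show ia: "integrable M a"
    by (intro integrableI_bounded) auto
  have "integrable M (\<lambda>w. (a w + h w * e w) - a w)"
    using Bochner_Integration.integrable_diff[OF int ia] .
  then show ihe: "integrable M (\<lambda>w. h w * e w)" by simp
  show "(\<integral>w. h w * e w \<partial>M) = 0" by (rule zero[OF hF ihe])
qed


lemma vec_nth_meas[measurable]: "(\<lambda>x::real^'n. x $ j) \<in> borel_measurable borel"
  by (intro borel_measurable_continuous_onI continuous_on_component continuous_on_id)

lemma vec_nth_meas2[measurable (raw)]: "f \<in> borel_measurable M \<Longrightarrow> (\<lambda>x. (f x :: real^'n) $ j) \<in> borel_measurable M"
  using measurable_compose[OF _ vec_nth_meas] by blast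

locale model =
  fixes M :: "'a measure" and MU :: "'u measure"
    and X Y \<zeta> \<eta> :: "'a \<Rightarrow> real" and Z :: "'a \<Rightarrow> real^'p" and U :: "'a \<Rightarrow> 'u"
    and \<xi>Y \<xi>X :: "'u \<Rightarrow> real"
    and bXY bYX :: real and piX piY :: "real^'p"
  assumes P: "prob_space M"
    and mX[measurable]: "X \<in> borel_measurable M" and mY[measurable]: "Y \<in> borel_measurable M"
    and mZ[measurable]: "Z \<in> borel_measurable M"
    and mzeta[measurable]: "\<zeta> \<in> borel_measurable M" and meta[measurable]: "\<eta> \<in> borel_measurable M"
    and mU[measurable]: "U \<in> measurable M MU"
    and mxiY[measurable]: "\<xi>Y \<in> borel_measurable MU" and mxiX[measurable]: "\<xi>X \<in> borel_measurable MU"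
    and X2: "integrable M (\<lambda>w. (X w)\<^sup>2)" and Y2: "integrable M (\<lambda>w. (Y w)\<^sup>2)"
    and Zsq: "\<And>j. integrable M (\<lambda>w. (Z w $ j)\<^sup>2)"
    and Zmean: "\<And>j. integral\<^sup>L M (\<lambda>w. Z w $ j) = 0"
    and Sig_inv: "invertible (Sig M Z)"
    and eqY: "\<And>w. w \<in> space M \<Longrightarrow> Y w = bXY * X w + piY \<bullet> Z w + \<xi>Y (U w) + \<zeta> w"
    and eqX: "\<And>w. w \<in> space M \<Longrightarrow> X w = bYX * Y w + piX \<bullet> Z w + \<xi>X (U w) + \<eta> w"
    and xiY_int: "integrable M (\<lambda>w. \<xi>Y (U w))" and xiX_int: "integrable M (\<lambda>w. \<xi>X (U w))"
    and xiY_mean: "integral\<^sup>L M (\<lambda>w. \<xi>Y (U w)) = 0" and xiX_mean: "integral\<^sup>L M (\<lambda>w. \<xi>X (U w)) = 0"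
    and indep: "prob_space.indep_set M {Z -` A \<inter> space M | A. A \<in> sets borel}
                                       {U -` B \<inter> space M | B. B \<in> sets MU}"
    and zeta_int: "integrable M \<zeta>" and eta_int: "integrable M \<eta>"
    and cond_zeta: "AE w in M. real_cond_exp M
          (vimage_algebra (space M) (\<lambda>w. (\<eta> w, Z w, U w)) (borel \<Otimes>\<^sub>M (borel \<Otimes>\<^sub>M MU))) \<zeta> w = 0"
    and cond_eta: "AE w in M. real_cond_exp M
          (vimage_algebra (space M) (\<lambda>w. (\<zeta> w, Z w, U w)) (borel \<Otimes>\<^sub>M (borel \<Otimes>\<^sub>M MU))) \<eta> w = 0"
    and s_nz: "bXY * bYX \<noteq> 1"
    and mXX: "\<And>j. integrable M (\<lambda>w. X w * X w * Z w $ j)"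
    and mXY: "\<And>j. integrable M (\<lambda>w. X w * Y w * Z w $ j)"
    and mYY: "\<And>j. integrable M (\<lambda>w. Y w * Y w * Z w $ j)"
    and mZX: "\<And>j k. integrable M (\<lambda>w. Z w $ k * X w * Z w $ j)"
    and mZY: "\<And>j k. integrable M (\<lambda>w. Z w $ k * Y w * Z w $ j)"
begin

sublocale prob_space M by (rule P)

lemma swap: "model M MU Y X \<eta> \<zeta> Z U \<xi>X \<xi>Y bYX bXY piY piX"
proof -
  have ind: "prob_space.indep_set M {Z -` A \<inter> space M | A. A \<in> sets borel}
                                       {U -` B \<inter> space M | B. B \<in> sets MU}" by (rule indep)
  show ?thesis
    apply unfold_locales
    using P X2 Y2 Zsq Zmean Sig_inv eqX eqY xiY_int xiX_int xiY_mean xiX_mean ind zeta_int eta_int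
      cond_zeta cond_eta s_nz mXX mYY mZX mZY
    apply (simp_all add: mult.commute[of bYX bXY])
    using mXY by (simp add: mult.commute mult.left_commute)
qed

lemma Zj_int: "integrable M (\<lambda>w. Z w $ j)"
  by (rule square_integrable_imp_integrable[OF _ Zsq]) measurable

lemma X_int: "integrable M X"
  by (rule square_integrable_imp_integrable[OF _ X2]) measurable
lemma Y_int: "integrable M Y"
  by (rule square_integrable_imp_integrable[OF _ Y2]) measurable

lemma abs_prod_le: fixes a b :: real shows "\<bar>a * b\<bar> \<le> a\<^sup>2 + b\<^sup>2"
proof -
  have "0 \<le> (\<bar>a\<bar> - \<bar>b\<bar>)\<^sup>2" by simp
  then have "2 * (\<bar>a\<bar> * \<bar>b\<bar>) \<le> a\<^sup>2 + b\<^sup>2" by (simp add: power2_eq_square algebra_simps)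
  moreover have "0 \<le> \<bar>a\<bar> * \<bar>b\<bar>" by simp
  ultimately have "\<bar>a\<bar> * \<bar>b\<bar> \<le> a\<^sup>2 + b\<^sup>2" by linarith
  then show ?thesis by (simp add: abs_mult)
qed

lemma ZZ_int: "integrable M (\<lambda>w. Z w $ j * Z w $ k)"
proof (rule Bochner_Integration.integrable_bound[where f="\<lambda>w. (Z w $ j)\<^sup>2 + (Z w $ k)\<^sup>2"])
  show "integrable M (\<lambda>w. (Z w $ j)\<^sup>2 + (Z w $ k)\<^sup>2)" using Zsq by auto
  show "AE x in M. norm (Z x $ j * Z x $ k) \<le> norm ((Z x $ j)\<^sup>2 + (Z x $ k)\<^sup>2)"
    using abs_prod_le by auto
qed measurable

lemma inner_Z: "a \<bullet> Z w = (\<Sum>k\<in>UNIV. a $ k * Z w $ k)"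
  by (simp add: inner_vec_def)

lemma aZZ_int: "integrable M (\<lambda>w. (a \<bullet> Z w) * Z w $ j)"
proof -
  have "integrable M (\<lambda>w. \<Sum>k\<in>UNIV. a $ k * (Z w $ k * Z w $ j))"
    using ZZ_int by auto
  then show ?thesis by (simp add: inner_Z sum_distrib_right mult.assoc)
qed

lemma aZ_int: "integrable M (\<lambda>w. a \<bullet> Z w)"
proof -
  have "integrable M (\<lambda>w. \<Sum>k\<in>UNIV. a $ k * Z w $ k)"
    using Zj_int by auto
  then show ?thesis by (simp add: inner_Z)
qed

lemma aZX_int: "integrable M (\<lambda>w. (a \<bullet> Z w) * X w * Z w $ j)"
proof -
  have "integrable M (\<lambda>w. \<Sum>k\<in>UNIV. a $ k * (Z w $ k * X w * Z w $ j))"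
    using mZX by auto
  then show ?thesis by (simp add: inner_Z sum_distrib_right mult.assoc)
qed

lemma aZY_int: "integrable M (\<lambda>w. (a \<bullet> Z w) * Y w * Z w $ j)"
proof -
  have "integrable M (\<lambda>w. \<Sum>k\<in>UNIV. a $ k * (Z w $ k * Y w * Z w $ j))"
    using mZY by auto
  then show ?thesis by (simp add: inner_Z sum_distrib_right mult.assoc)
qed

lemma L_int: "integrable M (\<lambda>w. (a1 * X w + a2 * Y w + a \<bullet> Z w) * (b1 * X w + b2 * Y w) * Z w $ j)"
proof -
  have "integrable M (\<lambda>w. (a1 * b1) * (X w * X w * Z w $ j) + (a1 * b2 + a2 * b1) * (X w * Y w * Z w $ j)
     + (a2 * b2) * (Y w * Y w * Z w $ j) + b1 * ((a \<bullet> Z w) * X w * Z w $ j) + b2 * ((a \<bullet> Z w) * Y w * Z w $ j))"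
    using mXX mXY mYY aZX_int aZY_int by (intro Bochner_Integration.integrable_add integrable_mult_right) auto
  then show ?thesis by (simp add: algebra_simps)
qed

end

context model begin

abbreviation "FZ \<equiv> vimage_algebra (space M) Z borel"
abbreviation "FU \<equiv> vimage_algebra (space M) U MU"
abbreviation "Fe \<equiv> vimage_algebra (space M) (\<lambda>w. (\<eta> w, Z w, U w)) (borel \<Otimes>\<^sub>M (borel \<Otimes>\<^sub>M MU))"
abbreviation "Fz \<equiv> vimage_algebra (space M) (\<lambda>w. (\<zeta> w, Z w, U w)) (borel \<Otimes>\<^sub>M (borel \<Otimes>\<^sub>M MU))"

lemma mte: "(\<lambda>w. (\<eta> w, Z w, U w)) \<in> measurable M (borel \<Otimes>\<^sub>M (borel \<Otimes>\<^sub>M MU))" by measurable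
lemma mtz: "(\<lambda>w. (\<zeta> w, Z w, U w)) \<in> measurable M (borel \<Otimes>\<^sub>M (borel \<Otimes>\<^sub>M MU))" by measurable

lemma sfs_FZ: "sigma_finite_subalgebra M FZ" by (rule vimage_sfs[OF P]) measurable
lemma sfs_FU: "sigma_finite_subalgebra M FU" by (rule vimage_sfs[OF P mU])
lemma sfs_Fe: "sigma_finite_subalgebra M Fe" by (rule vimage_sfs[OF P mte])
lemma sfs_Fz: "sigma_finite_subalgebra M Fz" by (rule vimage_sfs[OF P mtz])

lemma indep_comp:
  fixes g :: "real^'p \<Rightarrow> real" and f :: "'u \<Rightarrow> real"
  assumes [measurable]: "f \<in> borel_measurable MU" "g \<in> borel_measurable borel"
  shows "indep_var borel (\<lambda>w. g (Z w)) borel (\<lambda>w. f (U w))"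
proof -
  have I0: "indep_sets (case_bool {Z -` A \<inter> space M | A. A \<in> sets borel} {U -` B \<inter> space M | B. B \<in> sets MU}) UNIV"
    using indep unfolding indep_set_def .
  have s1: "{(\<lambda>w. g (Z w)) -` A \<inter> space M | A. A \<in> sets borel} \<subseteq> {Z -` A \<inter> space M | A. A \<in> sets borel}"
  proof safe
    fix A :: "real set" assume "A \<in> sets borel"
    then have "g -` A \<in> sets borel" using measurable_sets[OF assms(2)] by simp
    moreover have "(\<lambda>w. g (Z w)) -` A \<inter> space M = Z -` (g -` A) \<inter> space M" by auto
    ultimately show "\<exists>B. (\<lambda>w. g (Z w)) -` A \<inter> space M = Z -` B \<inter> space M \<and> B \<in> sets borel" by blast
  qed
  have s2: "{(\<lambda>w. f (U w)) -` A \<inter> space M | A. A \<in> sets borel} \<subseteq> {U -` A \<inter> space M | A. A \<in> sets MU}"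
  proof safe
    fix A :: "real set" assume "A \<in> sets borel"
    then have "f -` A \<inter> space MU \<in> sets MU" using measurable_sets[OF assms(1)] by simp
    moreover have "(\<lambda>w. f (U w)) -` A \<inter> space M = U -` (f -` A \<inter> space MU) \<inter> space M"
      using measurable_space[OF mU] by auto
    ultimately show "\<exists>B. (\<lambda>w. f (U w)) -` A \<inter> space M = U -` B \<inter> space M \<and> B \<in> sets MU" by blast
  qed
  have I1: "indep_sets (\<lambda>i. {(case i of True \<Rightarrow> (\<lambda>w. g (Z w)) | False \<Rightarrow> (\<lambda>w. f (U w))) -` A \<inter> space M
        | A. A \<in> sets (case i of True \<Rightarrow> borel | False \<Rightarrow> borel)}) UNIV"
    by (rule indep_sets_mono_sets[OF I0]) (use s1 s2 in \<open>auto split: bool.split\<close>)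
  show ?thesis
    unfolding indep_var_def indep_vars_def2 using I1 by (auto split: bool.split)
qed

lemma indep_prod:
  fixes g :: "real^'p \<Rightarrow> real" and f :: "'u \<Rightarrow> real"
  assumes [measurable]: "f \<in> borel_measurable MU" "g \<in> borel_measurable borel"
    and fi: "integrable M (\<lambda>w. f (U w))" and gi: "integrable M (\<lambda>w. g (Z w))"
  shows "integrable M (\<lambda>w. g (Z w) * f (U w))"
    "(\<integral>w. g (Z w) * f (U w) \<partial>M) = (\<integral>w. g (Z w) \<partial>M) * (\<integral>w. f (U w) \<partial>M)"
proof -
  have I: "indep_var borel (\<lambda>w. g (Z w)) borel (\<lambda>w. f (U w))"
    by (rule indep_comp) measurable
  show "integrable M (\<lambda>w. g (Z w) * f (U w))"
    using indep_var_integrable[OF I] fi gi by simp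
  show "(\<integral>w. g (Z w) * f (U w) \<partial>M) = (\<integral>w. g (Z w) \<partial>M) * (\<integral>w. f (U w) \<partial>M)"
    using indep_var_lebesgue_integral[OF I] fi gi by simp
qed

lemma sets_FU: "sets FU = {U -` B \<inter> space M | B. B \<in> sets MU}"
  by (rule sets_vimage_algebra2) (use mU in \<open>simp add: measurable_def\<close>)
lemma sets_FZ: "sets FZ = {Z -` B \<inter> space M | B. B \<in> sets borel}"
  by (rule sets_vimage_algebra2) simp

lemma ind_int: "B \<in> sets N \<Longrightarrow> V \<in> measurable M N \<Longrightarrow> integrable M (\<lambda>w. indicator B (V w) :: real)"
  by (rule integrable_const_bound[where B=1]) (auto simp: indicator_def)

lemma cexp_ZU: "AE w in M. real_cond_exp M FU (\<lambda>w. Z w $ j) w = 0"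
proof (rule sigma_finite_subalgebra.real_cond_exp_charact[OF sfs_FU])
  fix A assume "A \<in> sets FU"
  then obtain B where B: "B \<in> sets MU" "A = U -` B \<inter> space M" unfolding sets_FU by auto
  have "(\<integral>x \<in> A. Z x $ j \<partial>M) = (\<integral>w. (Z w $ j) * indicator B (U w) \<partial>M)"
    unfolding set_lebesgue_integral_def B(2)
    by (intro Bochner_Integration.integral_cong) (auto simp: indicator_def)
  also have "\<dots> = (\<integral>w. Z w $ j \<partial>M) * (\<integral>w. indicator B (U w) \<partial>M)"
    by (rule indep_prod(2)[where g="\<lambda>z. z $ j" and f="indicator B"]) (use B Zj_int ind_int[OF B(1) mU] in auto)
  also have "\<dots> = 0" using Zmean by simp
  finally show "(\<integral>x \<in> A. Z x $ j \<partial>M) = (\<integral>x \<in> A. 0 \<partial>M)" by simp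
qed (use Zj_int in auto)

lemma RA_Y: "A \<in> sets FZ \<Longrightarrow> (\<integral>w. indicator A w * (\<xi>Y (U w) + \<zeta> w) \<partial>M) = 0"
proof -
  assume "A \<in> sets FZ"
  then obtain B where B: "B \<in> sets borel" "A = Z -` B \<inter> space M" unfolding sets_FZ by auto
  have i1: "integrable M (\<lambda>w. indicator B (Z w) * \<xi>Y (U w))"
    by (rule indep_prod(1)) (use B xiY_int ind_int[OF B(1) mZ] in auto)
  have e1: "(\<integral>w. indicator B (Z w) * \<xi>Y (U w) \<partial>M) = 0"
    using indep_prod(2)[of \<xi>Y "indicator B"] B xiY_int ind_int[OF B(1) mZ] xiY_mean by simp
  have hF: "(\<lambda>w. indicator B (Z w) :: real) \<in> borel_measurable Fe"
    using vimage_meas[OF mte, of "\<lambda>(t,z,u). indicator B z :: real"] B by simp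
  have i2: "integrable M (\<lambda>w. 0 + indicator B (Z w) * \<zeta> w)"
    using integrable_mult_indicator[of "Z -` B \<inter> space M" M \<zeta>] zeta_int B
    by (subst Bochner_Integration.integrable_cong[OF refl, where g="\<lambda>w. indicator (Z -` B \<inter> space M) w *\<^sub>R \<zeta> w"])
       (auto simp: indicator_def)
  have e2: "(\<integral>w. indicator B (Z w) * \<zeta> w \<partial>M) = 0"
    by (rule peel(3)[OF sfs_Fe zeta_int cond_zeta _ hF i2]) simp
  have "(\<integral>w. indicator A w * (\<xi>Y (U w) + \<zeta> w) \<partial>M)
     = (\<integral>w. indicator B (Z w) * \<xi>Y (U w) + indicator B (Z w) * \<zeta> w \<partial>M)"
    unfolding B(2) by (intro Bochner_Integration.integral_cong) (auto simp: indicator_def)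
  also have "\<dots> = 0" using i1 i2 e1 e2 by simp
  finally show ?thesis .
qed

lemma KEY: "(\<integral>w. (\<xi>Y (U w) + \<zeta> w) * (X w - bYX * Y w) * Z w $ j \<partial>M) = 0"
proof -
  let ?Q = "\<lambda>w. (\<xi>Y (U w) + \<zeta> w) * (X w - bYX * Y w) * Z w $ j"
  have iQ: "integrable M ?Q"
    using L_int[of "-bXY" 1 "-piY" 1 "-bYX" j]
    by (rule Bochner_Integration.integrable_cong[OF refl, THEN iffD1, rotated]) (auto simp: eqY algebra_simps)
  define a1 where "a1 w = \<xi>Y (U w) * (piX \<bullet> Z w + \<xi>X (U w) + \<eta> w) * Z w $ j" for w
  define h1 where "h1 w = (piX \<bullet> Z w + \<xi>X (U w) + \<eta> w) * Z w $ j" for w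
  have a1F: "a1 \<in> borel_measurable Fe"
    using vimage_meas[OF mte, of "\<lambda>(t,z,u). \<xi>Y u * (piX \<bullet> z + \<xi>X u + t) * z $ j"]
    unfolding a1_def by simp
  have h1F: "h1 \<in> borel_measurable Fe"
    using vimage_meas[OF mte, of "\<lambda>(t,z,u). (piX \<bullet> z + \<xi>X u + t) * z $ j"]
    unfolding h1_def by simp
  have Q1: "?Q w = a1 w + h1 w * \<zeta> w" if "w \<in> space M" for w
    unfolding a1_def h1_def using eqX[OF that] by (simp add: algebra_simps)
  have i1: "integrable M (\<lambda>w. a1 w + h1 w * \<zeta> w)"
    using iQ by (rule Bochner_Integration.integrable_cong[OF refl, THEN iffD1, rotated]) (simp add: Q1)
  note p1 = peel[OF sfs_Fe zeta_int cond_zeta a1F h1F i1]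
  have E1: "(\<integral>w. ?Q w \<partial>M) = (\<integral>w. a1 w \<partial>M)"
  proof -
    have "(\<integral>w. ?Q w \<partial>M) = (\<integral>w. a1 w + h1 w * \<zeta> w \<partial>M)" by (rule Bochner_Integration.integral_cong) (simp_all add: Q1)
    also have "\<dots> = (\<integral>w. a1 w \<partial>M)" using p1 by simp
    finally show ?thesis .
  qed
  define a2 where "a2 w = \<xi>Y (U w) * (piX \<bullet> Z w + \<xi>X (U w)) * Z w $ j" for w
  define h2 where "h2 w = \<xi>Y (U w) * Z w $ j" for w
  have a2F: "a2 \<in> borel_measurable Fz"
    using vimage_meas[OF mtz, of "\<lambda>(t,z,u). \<xi>Y u * (piX \<bullet> z + \<xi>X u) * z $ j"]
    unfolding a2_def by simp
  have h2F: "h2 \<in> borel_measurable Fz"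
    using vimage_meas[OF mtz, of "\<lambda>(t,z,u). \<xi>Y u * z $ j"]
    unfolding h2_def by simp
  have i2: "integrable M (\<lambda>w. a2 w + h2 w * \<eta> w)"
    using p1(1) by (rule Bochner_Integration.integrable_cong[OF refl, THEN iffD1, rotated])
      (simp add: a1_def a2_def h2_def algebra_simps)
  note p2 = peel[OF sfs_Fz eta_int cond_eta a2F h2F i2]
  have E2: "(\<integral>w. a1 w \<partial>M) = (\<integral>w. a2 w \<partial>M)"
  proof -
    have "(\<integral>w. a1 w \<partial>M) = (\<integral>w. a2 w + h2 w * \<eta> w \<partial>M)"
      by (rule Bochner_Integration.integral_cong) (simp_all add: a1_def a2_def h2_def algebra_simps)
    also have "\<dots> = (\<integral>w. a2 w \<partial>M)" using p2 by simp
    finally show ?thesis .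
  qed
  have t1i: "integrable M (\<lambda>w. ((piX \<bullet> Z w) * Z w $ j) * \<xi>Y (U w))"
    by (rule indep_prod(1)[where g="\<lambda>z. (piX \<bullet> z) * z $ j"]) (use xiY_int aZZ_int in auto)
  have t1e: "(\<integral>w. ((piX \<bullet> Z w) * Z w $ j) * \<xi>Y (U w) \<partial>M) = 0"
    using indep_prod(2)[where g="\<lambda>z. (piX \<bullet> z) * z $ j" and f=\<xi>Y] xiY_int aZZ_int xiY_mean by simp
  have t2i: "integrable M (\<lambda>w. 0 + (\<xi>Y (U w) * \<xi>X (U w)) * Z w $ j)"
  proof -
    have "integrable M (\<lambda>w. a2 w - ((piX \<bullet> Z w) * Z w $ j) * \<xi>Y (U w))"
      using p2(1) t1i by auto
    then show ?thesis
      by (rule Bochner_Integration.integrable_cong[OF refl, THEN iffD1, rotated])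
        (simp add: a2_def algebra_simps)
  qed
  have hU: "(\<lambda>w. \<xi>Y (U w) * \<xi>X (U w)) \<in> borel_measurable FU"
    using vimage_meas[OF mU, of "\<lambda>u. \<xi>Y u * \<xi>X u"] by simp
  have t2e: "(\<integral>w. (\<xi>Y (U w) * \<xi>X (U w)) * Z w $ j \<partial>M) = 0"
    by (rule peel(3)[OF sfs_FU Zj_int cexp_ZU _ hU t2i]) simp
  have t2i': "integrable M (\<lambda>w. (\<xi>Y (U w) * \<xi>X (U w)) * Z w $ j)" using t2i by simp
  have "(\<integral>w. a2 w \<partial>M) = (\<integral>w. ((piX \<bullet> Z w) * Z w $ j) * \<xi>Y (U w) + (\<xi>Y (U w) * \<xi>X (U w)) * Z w $ j \<partial>M)"
    by (rule Bochner_Integration.integral_cong) (simp_all add: a2_def algebra_simps)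
  also have "\<dots> = 0" using t1i t2i' t1e t2e by simp
  finally show ?thesis using E1 E2 by simp
qed

end

context model begin

abbreviation "gX \<equiv> gammaX bXY bYX piX piY"
abbreviation "gY \<equiv> gammaY bXY bYX piX piY"
abbreviation "sv \<equiv> 1 - bXY * bYX"

lemma sv_nz: "sv \<noteq> 0" using s_nz by simp

lemma solveX: "w \<in> space M \<Longrightarrow> X w * sv = bYX * (piY \<bullet> Z w + \<xi>Y (U w) + \<zeta> w) + piX \<bullet> Z w + \<xi>X (U w) + \<eta> w"
proof -
  assume w: "w \<in> space M"
  note e1 = eqX[OF w] and e2 = eqY[OF w]
  show ?thesis using e1 e2 by algebra
qed

lemma solveY: "w \<in> space M \<Longrightarrow> Y w * sv = bXY * (piX \<bullet> Z w + \<xi>X (U w) + \<eta> w) + piY \<bullet> Z w + \<xi>Y (U w) + \<zeta> w"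
proof -
  assume w: "w \<in> space M"
  note e1 = eqX[OF w] and e2 = eqY[OF w]
  show ?thesis using e1 e2 by algebra
qed

lemma gX_inner: "gX \<bullet> z = (piX \<bullet> z + bYX * (piY \<bullet> z)) / sv"
  by (simp add: gammaX_def inner_add_left)
lemma gY_inner: "gY \<bullet> z = (piY \<bullet> z + bXY * (piX \<bullet> z)) / sv"
  by (simp add: gammaY_def inner_add_left)

lemma Lb_eq:
  assumes w: "w \<in> space M"
  shows "(Y w - b * X w) - (gY - b *\<^sub>R gX) \<bullet> Z w
    = ((1 - b * bYX) / sv) * (\<xi>Y (U w) + \<zeta> w) + ((bXY - b) / sv) * (\<xi>X (U w) + \<eta> w)"
proof -
  have h1: "(gY \<bullet> Z w) * sv = piY \<bullet> Z w + bXY * (piX \<bullet> Z w)"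
    unfolding gY_inner using sv_nz by simp
  have h2: "(gX \<bullet> Z w) * sv = piX \<bullet> Z w + bYX * (piY \<bullet> Z w)"
    unfolding gX_inner using sv_nz by simp
  have V0: "(gY - b *\<^sub>R gX) \<bullet> Z w = gY \<bullet> Z w - b * (gX \<bullet> Z w)" by (simp add: inner_diff_left)
  have V: "((gY - b *\<^sub>R gX) \<bullet> Z w) * sv = (piY \<bullet> Z w + bXY * (piX \<bullet> Z w)) - b * (piX \<bullet> Z w + bYX * (piY \<bullet> Z w))"
    using V0 h1 h2 by algebra
  have key: "((Y w - b * X w) - (gY - b *\<^sub>R gX) \<bullet> Z w) * sv
      = (1 - b * bYX) * (\<xi>Y (U w) + \<zeta> w) + (bXY - b) * (\<xi>X (U w) + \<eta> w)"
    using solveX[OF w] solveY[OF w] V by algebra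
  have r: "((1 - b * bYX) / sv) * (\<xi>Y (U w) + \<zeta> w) + ((bXY - b) / sv) * (\<xi>X (U w) + \<eta> w)
     = ((1 - b * bYX) * (\<xi>Y (U w) + \<zeta> w) + (bXY - b) * (\<xi>X (U w) + \<eta> w)) / sv"
    by (simp add: add_divide_distrib)
  show ?thesis unfolding r using key sv_nz by (simp add: eq_divide_eq)
qed

lemma RY_int: "integrable M (\<lambda>w. \<xi>Y (U w) + \<zeta> w)" using xiY_int zeta_int by auto
lemma RX_int: "integrable M (\<lambda>w. \<xi>X (U w) + \<eta> w)" using xiX_int eta_int by auto

lemma CEXP: "AE w in M. cexpZ M Z (\<lambda>w. Y w - b * X w) w = (gY - b *\<^sub>R gX) \<bullet> Z w"
  unfolding cexpZ_def
proof (rule sigma_finite_subalgebra.real_cond_exp_charact[OF sfs_FZ])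
  interpret sw: model M MU Y X \<eta> \<zeta> Z U \<xi>X \<xi>Y bYX bXY piY piX by (rule swap)
  let ?v = "gY - b *\<^sub>R gX"
  fix A assume A: "A \<in> sets FZ"
  then have AM: "A \<in> sets M" using sfs_FZ by (meson sigma_finite_subalgebra.subalg subalgebra_def subsetD)
  let ?c1 = "(1 - b * bYX) / sv" and ?c2 = "(bXY - b) / sv"
  have i1: "integrable M (\<lambda>w. indicator A w * (?v \<bullet> Z w))"
    using integrable_mult_indicator[OF AM aZ_int[of ?v]] by simp
  have i2: "integrable M (\<lambda>w. indicator A w * (\<xi>Y (U w) + \<zeta> w))"
    using integrable_mult_indicator[OF AM RY_int] by simp
  have i3: "integrable M (\<lambda>w. indicator A w * (\<xi>X (U w) + \<eta> w))"
    using integrable_mult_indicator[OF AM RX_int] by simp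
  have "(\<integral>x \<in> A. Y x - b * X x \<partial>M)
      = (\<integral>w. indicator A w * (?v \<bullet> Z w) + ?c1 * (indicator A w * (\<xi>Y (U w) + \<zeta> w))
             + ?c2 * (indicator A w * (\<xi>X (U w) + \<eta> w)) \<partial>M)"
    unfolding set_lebesgue_integral_def
  proof (rule Bochner_Integration.integral_cong[OF refl])
    fix w assume w: "w \<in> space M"
    have "Y w - b * X w = ?v \<bullet> Z w + ?c1 * (\<xi>Y (U w) + \<zeta> w) + ?c2 * (\<xi>X (U w) + \<eta> w)"
      using Lb_eq[OF w, of b] by (simp add: algebra_simps)
    moreover have aux: "\<And>i v c1 c2 r1 r2::real. i * (v + c1 * r1 + c2 * r2) = i * v + c1 * (i * r1) + c2 * (i * r2)"
      by (simp add: algebra_simps)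
    ultimately show "indicator A w *\<^sub>R (Y w - b * X w) = indicator A w * (?v \<bullet> Z w) + ?c1 * (indicator A w * (\<xi>Y (U w) + \<zeta> w))
             + ?c2 * (indicator A w * (\<xi>X (U w) + \<eta> w))"
      by (simp only: real_scaleR_def)
  qed
  also have "\<dots> = (\<integral>w. indicator A w * (?v \<bullet> Z w) \<partial>M)"
    using i1 i2 i3 RA_Y[OF A] sw.RA_Y[OF A] by simp
  also have "\<dots> = (\<integral>x \<in> A. ?v \<bullet> Z x \<partial>M)"
    unfolding set_lebesgue_integral_def by simp
  finally show "(\<integral>x \<in> A. Y x - b * X x \<partial>M) = (\<integral>x \<in> A. ?v \<bullet> Z x \<partial>M)" .
next
  show "integrable M (\<lambda>w. Y w - b * X w)" using X_int Y_int by auto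
  show "integrable M (\<lambda>w. (gY - b *\<^sub>R gX) \<bullet> Z w)" by (rule aZ_int)
  show "(\<lambda>w. (gY - b *\<^sub>R gX) \<bullet> Z w) \<in> borel_measurable FZ"
    using vimage_meas[OF mZ, of "\<lambda>z. (gY - b *\<^sub>R gX) \<bullet> z"] by simp
qed

lemma LAM: "AE w in M. (Y w - b * X w) - cexpZ M Z (\<lambda>w. Y w - b * X w) w
   = ((1 - b * bYX) / sv) * (\<xi>Y (U w) + \<zeta> w) + ((bXY - b) / sv) * (\<xi>X (U w) + \<eta> w)"
  using CEXP[of b] AE_space by eventually_elim (use Lb_eq in auto)

end

definition res :: "real^'p^'p \<Rightarrow> real^'p \<Rightarrow> real^'p \<Rightarrow> ereal" where
  "res S vX vY = (let thD = matrix_inv S *v vX; thD' = matrix_inv S *v vY; den = thD' \<bullet> (S *v thD')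
     in if den \<noteq> 0 then ereal (thD \<bullet> (S *v thD') / den) else PInfty)"

lemma aux_X: "1 - p * q \<noteq> (0::real) \<Longrightarrow> (c1 * r1 + c2 * r2) * x * z =
  (c1 * (r1 * (x - q * y) * z) + c1 * q * (r1 * (y - p * x) * z) + c2 * (r2 * (x - q * y) * z) + c2 * q * (r2 * (y - p * x) * z)) / (1 - p * q)"
  by (simp add: eq_divide_eq) algebra

lemma aux_Y: "1 - p * q \<noteq> (0::real) \<Longrightarrow> (c1 * r1 + c2 * r2) * y * z =
  (c1 * (r1 * (y - p * x) * z) + c1 * p * (r1 * (x - q * y) * z) + c2 * (r2 * (y - p * x) * z) + c2 * p * (r2 * (x - q * y) * z)) / (1 - p * q)"
  by (simp add: eq_divide_eq) algebra

context model begin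

definition "Aj j = (\<integral>w. (\<xi>X (U w) + \<eta> w) * (X w - bYX * Y w) * Z w $ j \<partial>M)"
definition "Bj j = (\<integral>w. (\<xi>Y (U w) + \<zeta> w) * (Y w - bXY * X w) * Z w $ j \<partial>M)"

lemma RY_gen_int: "integrable M (\<lambda>w. (\<xi>Y (U w) + \<zeta> w) * (b1 * X w + b2 * Y w) * Z w $ j)"
  using L_int[of "-bXY" 1 "-piY" b1 b2 j]
  by (rule Bochner_Integration.integrable_cong[OF refl, THEN iffD1, rotated]) (auto simp: eqY algebra_simps)

lemma RX_gen_int: "integrable M (\<lambda>w. (\<xi>X (U w) + \<eta> w) * (b1 * X w + b2 * Y w) * Z w $ j)"
proof -
  interpret sw: model M MU Y X \<eta> \<zeta> Z U \<xi>X \<xi>Y bYX bXY piY piX by (rule swap)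
  show ?thesis using sw.RY_gen_int[of b2 b1 j] by (simp add: add.commute)
qed

lemma f_ints:
  "integrable M (\<lambda>w. (\<xi>Y (U w) + \<zeta> w) * (X w - bYX * Y w) * Z w $ j)"
  "integrable M (\<lambda>w. (\<xi>Y (U w) + \<zeta> w) * (Y w - bXY * X w) * Z w $ j)"
  "integrable M (\<lambda>w. (\<xi>X (U w) + \<eta> w) * (X w - bYX * Y w) * Z w $ j)"
  "integrable M (\<lambda>w. (\<xi>X (U w) + \<eta> w) * (Y w - bXY * X w) * Z w $ j)"
  using RY_gen_int[of 1 "-bYX" j] RY_gen_int[of "-bXY" 1 j] RX_gen_int[of 1 "-bYX" j] RX_gen_int[of "-bXY" 1 j]
  by (simp_all add: algebra_simps)

lemma KEY2: "(\<integral>w. (\<xi>X (U w) + \<eta> w) * (Y w - bXY * X w) * Z w $ j \<partial>M) = 0"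
proof -
  interpret sw: model M MU Y X \<eta> \<zeta> Z U \<xi>X \<xi>Y bYX bXY piY piX by (rule swap)
  show ?thesis using sw.KEY[of j] .
qed

lemma INTX: "(\<integral>w. (c1 * (\<xi>Y (U w) + \<zeta> w) + c2 * (\<xi>X (U w) + \<eta> w)) * X w * Z w $ j \<partial>M)
   = (c2 * Aj j + bYX * c1 * Bj j) / sv"
proof -
  have "(\<integral>w. (c1 * (\<xi>Y (U w) + \<zeta> w) + c2 * (\<xi>X (U w) + \<eta> w)) * X w * Z w $ j \<partial>M)
    = (\<integral>w. (c1 * ((\<xi>Y (U w) + \<zeta> w) * (X w - bYX * Y w) * Z w $ j)
        + c1 * bYX * ((\<xi>Y (U w) + \<zeta> w) * (Y w - bXY * X w) * Z w $ j)
        + c2 * ((\<xi>X (U w) + \<eta> w) * (X w - bYX * Y w) * Z w $ j)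
        + c2 * bYX * ((\<xi>X (U w) + \<eta> w) * (Y w - bXY * X w) * Z w $ j)) / sv \<partial>M)"
    using aux_X[OF sv_nz] by simp
  also have "\<dots> = (c2 * Aj j + bYX * c1 * Bj j) / sv"
    using f_ints[of j] KEY[of j] KEY2[of j] unfolding Aj_def Bj_def by simp
  finally show ?thesis .
qed

lemma INTY: "(\<integral>w. (c1 * (\<xi>Y (U w) + \<zeta> w) + c2 * (\<xi>X (U w) + \<eta> w)) * Y w * Z w $ j \<partial>M)
   = (c1 * Bj j + bXY * c2 * Aj j) / sv"
proof -
  have "(\<integral>w. (c1 * (\<xi>Y (U w) + \<zeta> w) + c2 * (\<xi>X (U w) + \<eta> w)) * Y w * Z w $ j \<partial>M)
    = (\<integral>w. (c1 * ((\<xi>Y (U w) + \<zeta> w) * (Y w - bXY * X w) * Z w $ j)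
        + c1 * bXY * ((\<xi>Y (U w) + \<zeta> w) * (X w - bYX * Y w) * Z w $ j)
        + c2 * ((\<xi>X (U w) + \<eta> w) * (Y w - bXY * X w) * Z w $ j)
        + c2 * bXY * ((\<xi>X (U w) + \<eta> w) * (X w - bYX * Y w) * Z w $ j)) / sv \<partial>M)"
    using aux_Y[OF sv_nz] by simp
  also have "\<dots> = (c1 * Bj j + bXY * c2 * Aj j) / sv"
    using f_ints[of j] KEY[of j] KEY2[of j] unfolding Aj_def Bj_def by simp
  finally show ?thesis .
qed

end

context model begin

lemma Sv_eq: "(Sig M Z *v th) $ j = (\<integral>w. Z w $ j * (th \<bullet> Z w) \<partial>M)"
proof -
  have "(Sig M Z *v th) $ j = (\<Sum>k\<in>UNIV. (\<integral>w. Z w $ j * Z w $ k \<partial>M) * th $ k)"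
    by (simp add: matrix_vector_mult_def Sig_def)
  also have "\<dots> = (\<Sum>k\<in>UNIV. (\<integral>w. Z w $ j * Z w $ k * th $ k \<partial>M))"
    by simp
  also have "\<dots> = (\<integral>w. (\<Sum>k\<in>UNIV. Z w $ j * Z w $ k * th $ k) \<partial>M)"
    by (rule Bochner_Integration.integral_sum[symmetric]) (use ZZ_int in auto)
  also have "\<dots> = (\<integral>w. Z w $ j * (th \<bullet> Z w) \<partial>M)"
    by (simp add: inner_Z sum_distrib_left mult.assoc mult.commute mult.left_commute)
  finally show ?thesis .
qed

lemma quad: "th \<bullet> (Sig M Z *v th) = (\<integral>w. (th \<bullet> Z w) * (th \<bullet> Z w) \<partial>M)"
proof -
  have "th \<bullet> (Sig M Z *v th) = (\<Sum>j\<in>UNIV. th $ j * (\<integral>w. Z w $ j * (th \<bullet> Z w) \<partial>M))"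
    by (simp add: inner_vec_def Sv_eq)
  also have "\<dots> = (\<Sum>j\<in>UNIV. (\<integral>w. th $ j * (Z w $ j * (th \<bullet> Z w)) \<partial>M))"
    by simp
  also have "\<dots> = (\<integral>w. (\<Sum>j\<in>UNIV. th $ j * (Z w $ j * (th \<bullet> Z w))) \<partial>M)"
    by (rule Bochner_Integration.integral_sum[symmetric]) (use aZZ_int in \<open>auto simp: mult.commute\<close>)
  also have "\<dots> = (\<integral>w. (th \<bullet> Z w) * (th \<bullet> Z w) \<partial>M)"
    by (simp add: inner_Z[of th] sum_distrib_right mult.assoc mult.commute mult.left_commute)
  finally show ?thesis .
qed

lemma PD: "th \<bullet> (Sig M Z *v th) = 0 \<Longrightarrow> Sig M Z *v th = 0"
proof -
  assume q: "th \<bullet> (Sig M Z *v th) = 0"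
  have i: "integrable M (\<lambda>w. (th \<bullet> Z w) * (th \<bullet> Z w))"
  proof -
    have "integrable M (\<lambda>w. \<Sum>k\<in>UNIV. th $ k * ((th \<bullet> Z w) * Z w $ k))" using aZZ_int by auto
    then show ?thesis by (simp add: inner_Z[of th] sum_distrib_left mult.commute mult.left_commute)
  qed
  have "AE w in M. (th \<bullet> Z w) * (th \<bullet> Z w) = 0"
    using integral_nonneg_eq_0_iff_AE[OF i] q quad by simp
  then have ae: "AE w in M. th \<bullet> Z w = 0" by simp
  show ?thesis
  proof (subst vec_eq_iff, intro allI)
    fix j
    have "(Sig M Z *v th) $ j = (\<integral>w. Z w $ j * (th \<bullet> Z w) \<partial>M)" by (rule Sv_eq)
    also have "\<dots> = (\<integral>w. 0 \<partial>M)" by (rule integral_cong_AE) (use ae in auto)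
    finally show "(Sig M Z *v th) $ j = 0 $ j" by simp
  qed
qed

lemma SSi: "Sig M Z *v (matrix_inv (Sig M Z) *v v) = v"
proof -
  have "\<exists>A'. Sig M Z ** A' = mat 1 \<and> A' ** Sig M Z = mat 1" using Sig_inv unfolding invertible_def .
  then have "Sig M Z ** matrix_inv (Sig M Z) = mat 1" unfolding matrix_inv_def by (rule someI_ex[THEN conjunct1])
  then show ?thesis by (simp add: matrix_vector_mul_assoc)
qed

lemma den_nz: "(matrix_inv (Sig M Z) *v v) \<bullet> (Sig M Z *v (matrix_inv (Sig M Z) *v v)) = 0 \<longleftrightarrow> v = 0"
proof
  assume "(matrix_inv (Sig M Z) *v v) \<bullet> (Sig M Z *v (matrix_inv (Sig M Z) *v v)) = 0"
  then have "Sig M Z *v (matrix_inv (Sig M Z) *v v) = 0" by (rule PD)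
  then show "v = 0" using SSi by simp
qed simp

lemma R1: "vX = k *\<^sub>R vY \<Longrightarrow> res (Sig M Z) vX vY = (if vY \<noteq> 0 then ereal k else PInfty)"
proof -
  assume vX: "vX = k *\<^sub>R vY"
  let ?S = "Sig M Z" let ?t = "matrix_inv ?S *v vY"
  have tX: "matrix_inv ?S *v vX = k *\<^sub>R ?t" unfolding vX by (simp add: matrix_vector_mult_scaleR)
  show ?thesis
  proof (cases "vY = 0")
    case True then show ?thesis unfolding res_def Let_def by simp
  next
    case False
    then have d: "?t \<bullet> (?S *v ?t) \<noteq> 0" using den_nz by simp
    have "(k *\<^sub>R ?t) \<bullet> (?S *v ?t) / (?t \<bullet> (?S *v ?t)) = k" using d by simp
    then show ?thesis unfolding res_def Let_def tX using d False by simp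
  qed
qed

lemma R2: "vY = k *\<^sub>R vX \<Longrightarrow> res (Sig M Z) vX vY \<noteq> 0 \<and> (res (Sig M Z) vX vY \<noteq> PInfty \<longrightarrow> k \<noteq> 0)"
proof -
  assume vY: "vY = k *\<^sub>R vX"
  let ?S = "Sig M Z" let ?t = "matrix_inv ?S *v vX"
  have tY: "matrix_inv ?S *v vY = k *\<^sub>R ?t" unfolding vY by (simp add: matrix_vector_mult_scaleR)
  have SY: "?S *v (k *\<^sub>R ?t) = k *\<^sub>R vX" by (simp add: matrix_vector_mult_scaleR SSi)
  have St: "?S *v ?t = vX" by (rule SSi)
  show ?thesis
  proof (cases "(k *\<^sub>R ?t) \<bullet> (?S *v (k *\<^sub>R ?t)) = 0")
    case True then show ?thesis unfolding res_def Let_def tY by simp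
  next
    case False
    then have k: "k \<noteq> 0" and q: "?t \<bullet> vX \<noteq> 0" unfolding SY by auto
    have "?t \<bullet> (?S *v (k *\<^sub>R ?t)) / ((k *\<^sub>R ?t) \<bullet> (?S *v (k *\<^sub>R ?t))) \<noteq> 0"
      unfolding SY using k q by simp
    then show ?thesis unfolding res_def Let_def tY using False k by simp
  qed
qed

end

context model begin

lemma EVAL:
  assumes u: "\<exists>!b'. b' \<in> mode_set gX gY" and t: "(THE b'. b' \<in> mode_set gX gY) = b"
  shows "oPCH M Z X Y gX gY = (ereal b,
     res (Sig M Z) (\<chi> j. (((bXY - b) / sv) * Aj j + bYX * ((1 - b * bYX) / sv) * Bj j) / sv)
                   (\<chi> j. (((1 - b * bYX) / sv) * Bj j + bXY * ((bXY - b) / sv) * Aj j) / sv),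
     ratio_set gX gY b)"
proof -
  let ?c1 = "(1 - b * bYX) / sv" and ?c2 = "(bXY - b) / sv"
  have mC[measurable]: "(\<lambda>w. cexpZ M Z (\<lambda>w. Y w - b * X w) w) \<in> borel_measurable M"
    unfolding cexpZ_def by (rule borel_measurable_cond_exp2)
  have ae: "AE w in M. (Y w - b * X w - cexpZ M Z (\<lambda>w. Y w - b * X w) w) * D w * Z w $ j
      = (?c1 * (\<xi>Y (U w) + \<zeta> w) + ?c2 * (\<xi>X (U w) + \<eta> w)) * D w * Z w $ j" for D :: "'a \<Rightarrow> real" and j
    using LAM[of b] by eventually_elim simp
  have IX: "(\<chi> j. \<integral>w. (Y w - b * X w - cexpZ M Z (\<lambda>w. Y w - b * X w) w) * X w * Z w $ j \<partial>M)
     = (\<chi> j. (?c2 * Aj j + bYX * ?c1 * Bj j) / sv)"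
  proof (subst vec_eq_iff, intro allI)
    fix j
    have "(\<integral>w. (Y w - b * X w - cexpZ M Z (\<lambda>w. Y w - b * X w) w) * X w * Z w $ j \<partial>M)
       = (\<integral>w. (?c1 * (\<xi>Y (U w) + \<zeta> w) + ?c2 * (\<xi>X (U w) + \<eta> w)) * X w * Z w $ j \<partial>M)"
      by (rule integral_cong_AE[OF _ _ ae]) measurable
    also have "\<dots> = (?c2 * Aj j + bYX * ?c1 * Bj j) / sv" by (rule INTX)
    finally show "(\<chi> j. \<integral>w. (Y w - b * X w - cexpZ M Z (\<lambda>w. Y w - b * X w) w) * X w * Z w $ j \<partial>M) $ j
     = (\<chi> j. (?c2 * Aj j + bYX * ?c1 * Bj j) / sv) $ j" by simp
  qed
  have IY: "(\<chi> j. \<integral>w. (Y w - b * X w - cexpZ M Z (\<lambda>w. Y w - b * X w) w) * Y w * Z w $ j \<partial>M)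
     = (\<chi> j. (?c1 * Bj j + bXY * ?c2 * Aj j) / sv)"
  proof (subst vec_eq_iff, intro allI)
    fix j
    have "(\<integral>w. (Y w - b * X w - cexpZ M Z (\<lambda>w. Y w - b * X w) w) * Y w * Z w $ j \<partial>M)
       = (\<integral>w. (?c1 * (\<xi>Y (U w) + \<zeta> w) + ?c2 * (\<xi>X (U w) + \<eta> w)) * Y w * Z w $ j \<partial>M)"
      by (rule integral_cong_AE[OF _ _ ae]) measurable
    also have "\<dots> = (?c1 * Bj j + bXY * ?c2 * Aj j) / sv" by (rule INTY)
    finally show "(\<chi> j. \<integral>w. (Y w - b * X w - cexpZ M Z (\<lambda>w. Y w - b * X w) w) * Y w * Z w $ j \<partial>M) $ j
     = (\<chi> j. (?c1 * Bj j + bXY * ?c2 * Aj j) / sv) $ j" by simp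
  qed
  show ?thesis
    unfolding oPCH_def using u t by (simp add: Let_def IX IY res_def)
qed

lemma EVAL1:
  assumes u: "\<exists>!b'. b' \<in> mode_set gX gY" and t: "(THE b'. b' \<in> mode_set gX gY) = bXY"
  shows "oPCH M Z X Y gX gY = (ereal bXY, (if (\<chi> j. Bj j) \<noteq> 0 then ereal bYX else PInfty), ratio_set gX gY bXY)"
proof -
  have c1: "(1 - bXY * bYX) / sv = 1" using sv_nz by simp
  let ?vY = "(\<chi> j. (1 * Bj j + bXY * 0 * Aj j) / sv)"
  have vX: "(\<chi> j. (0 * Aj j + bYX * 1 * Bj j) / sv) = bYX *\<^sub>R ?vY" by (simp add: vec_eq_iff)
  have nz: "?vY \<noteq> 0 \<longleftrightarrow> (\<chi> j. Bj j) \<noteq> 0" using sv_nz by (simp add: vec_eq_iff)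
  show ?thesis unfolding EVAL[OF u t] c1 using R1[OF vX] nz by simp
qed

lemma EVAL2:
  assumes bYX: "bYX \<noteq> 0"
    and u: "\<exists>!b'. b' \<in> mode_set gX gY" and t: "(THE b'. b' \<in> mode_set gX gY) = 1 / bYX"
  shows "fst (snd (oPCH M Z X Y gX gY)) \<noteq> 0 \<and> (fst (snd (oPCH M Z X Y gX gY)) \<noteq> PInfty \<longrightarrow> bXY \<noteq> 0)"
proof -
  have c1: "(1 - 1 / bYX * bYX) / sv = 0" using bYX by simp
  let ?c2 = "(bXY - 1 / bYX) / sv"
  let ?vX = "(\<chi> j. (?c2 * Aj j + bYX * 0 * Bj j) / sv)"
  have vY: "(\<chi> j. (0 * Bj j + bXY * ?c2 * Aj j) / sv) = bXY *\<^sub>R ?vX" by (simp add: vec_eq_iff)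
  show ?thesis unfolding EVAL[OF u t] c1 using R2[OF vY] by simp
qed

lemma COV:
  assumes "(\<chi> j. (\<integral>w. Y w * (\<xi>Y (U w) + \<zeta> w) * Z w $ j \<partial>M)
                 - (\<integral>w. Y w * (\<xi>Y (U w) + \<zeta> w) \<partial>M) * (\<integral>w. Z w $ j \<partial>M)) \<noteq> 0"
  shows "(\<chi> j. Bj j) \<noteq> 0"
proof
  assume B0: "(\<chi> j. Bj j) = 0"
  have "(\<integral>w. Y w * (\<xi>Y (U w) + \<zeta> w) * Z w $ j \<partial>M) = 0" for j
  proof -
    have "(\<integral>w. Y w * (\<xi>Y (U w) + \<zeta> w) * Z w $ j \<partial>M)
       = (\<integral>w. (1 * (\<xi>Y (U w) + \<zeta> w) + 0 * (\<xi>X (U w) + \<eta> w)) * Y w * Z w $ j \<partial>M)"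
      by (rule Bochner_Integration.integral_cong) (simp_all add: mult.commute)
    also have "\<dots> = (1 * Bj j + bXY * 0 * Aj j) / sv" by (rule INTY)
    also have "\<dots> = 0" using B0 by (simp add: vec_eq_iff)
    finally show ?thesis .
  qed
  then show False using assms Zmean by (simp add: vec_eq_iff)
qed

end

definition cardA :: "real \<Rightarrow> real^'p \<Rightarrow> real^'p \<Rightarrow> real^'p \<Rightarrow> bool" where
  "cardA bYX piX piY gX \<longleftrightarrow>
     (let VXY = {j. piX $ j \<noteq> 0 \<and> piY $ j = 0};
          VYX = {j. piY $ j \<noteq> 0 \<and> piX $ j = 0};
          Vpl = {j. piX $ j \<noteq> 0 \<and> piY $ j \<noteq> 0};
          SX = supp_set gX
      in card VXY > max (Max (range (\<lambda>c. card {j \<in> Vpl \<inter> SX. piY $ j / gX $ j = c})))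
                        (max (if bYX \<noteq> 0 then card VYX else 0)
                             (if bYX \<noteq> 0 then card (Vpl - SX) else 0)))"

lemma assmA_cardA: "assmA M Z Y RY bYX piX piY gX \<Longrightarrow> cardA bYX piX piY gX"
  unfolding assmA_def cardA_def Let_def by blast

locale comb =
  fixes bXY bYX :: real and piX piY :: "real^'p"
  assumes s_nz: "bXY * bYX \<noteq> 1"
    and CA: "cardA bYX piX piY (gammaX bXY bYX piX piY)"
begin

abbreviation "gX \<equiv> gammaX bXY bYX piX piY"
abbreviation "gY \<equiv> gammaY bXY bYX piX piY"
abbreviation "VXY \<equiv> {j. piX $ j \<noteq> 0 \<and> piY $ j = 0}"
abbreviation "VYX \<equiv> {j. piY $ j \<noteq> 0 \<and> piX $ j = 0}"
abbreviation "Vpl \<equiv> {j. piX $ j \<noteq> 0 \<and> piY $ j \<noteq> 0}"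

lemma sv: "1 - bXY * bYX \<noteq> 0" using s_nz by simp

lemma gXj: "gX $ j = (piX $ j + bYX * piY $ j) / (1 - bXY * bYX)"
  by (simp add: gammaX_def)
lemma gYj: "gY $ j = (piY $ j + bXY * piX $ j) / (1 - bXY * bYX)"
  by (simp add: gammaY_def)
lemma R1: "gY $ j = bXY * gX $ j + piY $ j"
  unfolding gXj gYj using sv by (simp add: field_simps)
lemma R2: "gX $ j = bYX * gY $ j + piX $ j"
  unfolding gXj gYj using sv by (simp add: field_simps)

lemma gX0: "piX $ j = 0 \<Longrightarrow> piY $ j = 0 \<Longrightarrow> gX $ j = 0" by (simp add: gXj)
lemma gY0: "piX $ j = 0 \<Longrightarrow> piY $ j = 0 \<Longrightarrow> gY $ j = 0" by (simp add: gYj)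

lemma C1: "card {j \<in> Vpl \<inter> supp_set gX. piY $ j / gX $ j = c} < card VXY"
proof -
  have fin: "finite (range (\<lambda>c. card {j \<in> Vpl \<inter> supp_set gX. piY $ j / gX $ j = c}))"
  proof (rule finite_subset[of _ "{..card (UNIV::'p set)}"])
    show "range (\<lambda>c. card {j \<in> Vpl \<inter> supp_set gX. piY $ j / gX $ j = c}) \<subseteq> {..card (UNIV::'p set)}"
      by (auto intro!: card_mono)
  qed simp
  have "card {j \<in> Vpl \<inter> supp_set gX. piY $ j / gX $ j = c} \<le> Max (range (\<lambda>c. card {j \<in> Vpl \<inter> supp_set gX. piY $ j / gX $ j = c}))"
    by (rule Max_ge[OF fin]) simp
  then show ?thesis using CA unfolding cardA_def Let_def by linarith
qed

lemma C2: "bYX \<noteq> 0 \<Longrightarrow> card VYX < card VXY"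
  using CA unfolding cardA_def Let_def by simp
lemma C3: "bYX \<noteq> 0 \<Longrightarrow> card (Vpl - supp_set gX) < card VXY"
  using CA unfolding cardA_def Let_def by simp
lemma C0: "0 < card VXY"
  using CA unfolding cardA_def Let_def by simp

lemma rs_def': "j \<in> ratio_set g h c \<longleftrightarrow> g $ j \<noteq> 0 \<and> h $ j / g $ j = c"
  by (simp add: ratio_set_def supp_set_def)

lemma A1: "ratio_set gX gY bXY = VXY"
proof (intro set_eqI iffI)
  fix j assume "j \<in> ratio_set gX gY bXY"
  then have g: "gX $ j \<noteq> 0" "gY $ j / gX $ j = bXY" by (auto simp: rs_def')
  then have "gY $ j = bXY * gX $ j" by (simp add: field_simps)
  then have "piY $ j = 0" using R1[of j] by simp
  moreover have "piX $ j \<noteq> 0" using g gX0 calculation by blast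
  ultimately show "j \<in> VXY" by simp
next
  fix j assume "j \<in> VXY"
  then have p: "piX $ j \<noteq> 0" "piY $ j = 0" by auto
  have "gX $ j \<noteq> 0" using p sv by (simp add: gXj)
  moreover have "gY $ j = bXY * gX $ j" using R1[of j] p by simp
  ultimately show "j \<in> ratio_set gX gY bXY" by (simp add: rs_def')
qed

lemma A2: "c \<noteq> bXY \<Longrightarrow> card (ratio_set gX gY c) < card VXY"
proof -
  assume c: "c \<noteq> bXY"
  show ?thesis
  proof (cases "\<exists>j \<in> ratio_set gX gY c. piX $ j = 0")
    case True
    then obtain j where j: "j \<in> ratio_set gX gY c" "piX $ j = 0" by blast
    then have g: "gX $ j \<noteq> 0" "gY $ j / gX $ j = c" by (auto simp: rs_def')
    have "gX $ j = bYX * gY $ j" using R2[of j] j by simp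
    then have bY: "bYX \<noteq> 0" using g by auto
    have "c = 1 / bYX" using g \<open>gX $ j = bYX * gY $ j\<close> by (auto simp: field_simps)
    have sub: "ratio_set gX gY c \<subseteq> VYX"
    proof
      fix k assume k: "k \<in> ratio_set gX gY c"
      then have gk: "gX $ k \<noteq> 0" "gY $ k / gX $ k = 1 / bYX" using \<open>c = 1 / bYX\<close> by (auto simp: rs_def')
      then have "bYX * gY $ k = gX $ k" using bY by (simp add: field_simps)
      then have "piX $ k = 0" using R2[of k] by simp
      moreover have "piY $ k \<noteq> 0" using gk gX0 calculation by blast
      ultimately show "k \<in> VYX" by simp
    qed
    have "card (ratio_set gX gY c) \<le> card VYX" by (rule card_mono[OF _ sub]) simp
    then show ?thesis using C2[OF bY] by linarith
  next
    case False
    have sub: "ratio_set gX gY c \<subseteq> {j \<in> Vpl \<inter> supp_set gX. piY $ j / gX $ j = c - bXY}"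
    proof
      fix k assume k: "k \<in> ratio_set gX gY c"
      then have gk: "gX $ k \<noteq> 0" "gY $ k / gX $ k = c" by (auto simp: rs_def')
      have px: "piX $ k \<noteq> 0" using False k by blast
      have e: "piY $ k / gX $ k = c - bXY" using gk R1[of k] by (simp add: field_simps)
      have "piY $ k \<noteq> 0"
      proof
        assume "piY $ k = 0"
        with e have "c - bXY = 0" by simp
        with c show False by simp
      qed
      then show "k \<in> {j \<in> Vpl \<inter> supp_set gX. piY $ j / gX $ j = c - bXY}"
        using px gk e by (simp add: supp_set_def)
    qed
    have "card (ratio_set gX gY c) \<le> card {j \<in> Vpl \<inter> supp_set gX. piY $ j / gX $ j = c - bXY}"
      by (rule card_mono[OF _ sub]) simp
    then show ?thesis using C1[of "c - bXY"] by linarith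
  qed
qed

lemma MODE_A: "(\<exists>!b. b \<in> mode_set gX gY) \<and> (THE b. b \<in> mode_set gX gY) = bXY"
proof -
  have le: "card (ratio_set gX gY c) \<le> card (ratio_set gX gY bXY)" for c
    using A2[of c] A1 by (cases "c = bXY") auto
  have m: "bXY \<in> mode_set gX gY" unfolding mode_set_def using le by simp
  have u: "b = bXY" if "b \<in> mode_set gX gY" for b
  proof (rule ccontr)
    assume "b \<noteq> bXY"
    then have "card (ratio_set gX gY b) < card VXY" by (rule A2)
    moreover have "card (ratio_set gX gY bXY) \<le> card (ratio_set gX gY b)" using that unfolding mode_set_def by simp
    ultimately show False using A1 by simp
  qed
  have ex: "\<exists>!b. b \<in> mode_set gX gY" using m u by blast
  then show ?thesis using the1_equality[OF ex m] by simp
qed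

lemma B:
  assumes ge: "card VXY \<le> card (ratio_set gY gX c)"
  shows "(c = bYX \<and> bYX = 0) \<or> (c = 1 / bXY \<and> bXY \<noteq> 0 \<and> ratio_set gY gX c = VXY)"
proof (cases "c = bYX")
  case True
  have sub: "ratio_set gY gX c \<subseteq> VYX"
  proof
    fix k assume k: "k \<in> ratio_set gY gX c"
    then have gk: "gY $ k \<noteq> 0" "gX $ k / gY $ k = bYX" using True by (auto simp: rs_def')
    then have "gX $ k = bYX * gY $ k" by (simp add: field_simps)
    then have "piX $ k = 0" using R2[of k] by simp
    moreover have "piY $ k \<noteq> 0" using gk gY0 calculation by blast
    ultimately show "k \<in> VYX" by simp
  qed
  have "card (ratio_set gY gX c) \<le> card VYX" by (rule card_mono[OF _ sub]) simp
  then have "bYX = 0" using C2 ge by (cases "bYX = 0") auto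
  then show ?thesis using True by simp
next
  case False
  show ?thesis
  proof (cases "\<exists>k \<in> ratio_set gY gX c. piY $ k = 0")
    case True
    then obtain k where k: "k \<in> ratio_set gY gX c" "piY $ k = 0" by blast
    then have gk: "gY $ k \<noteq> 0" "gX $ k / gY $ k = c" by (auto simp: rs_def')
    have e: "gY $ k = bXY * gX $ k" using R1[of k] k by simp
    then have bX: "bXY \<noteq> 0" using gk by auto
    have cc: "c = 1 / bXY" using gk e bX by (auto simp: field_simps)
    have sub: "ratio_set gY gX c \<subseteq> VXY"
    proof
      fix m assume m: "m \<in> ratio_set gY gX c"
      then have gm: "gY $ m \<noteq> 0" "gX $ m / gY $ m = c" by (auto simp: rs_def')
      show "m \<in> VXY"
      proof (rule ccontr)
        assume nm: "m \<notin> VXY"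
        show False
        proof (cases "piX $ m = 0")
          case True
          then have "gX $ m = bYX * gY $ m" using R2[of m] by simp
          then have "c = bYX" using gm by (simp add: field_simps)
          then show False using False by simp
        next
          case pX: False
          then have pY: "piY $ m \<noteq> 0" using nm by simp
          have "gX $ m * bXY = gY $ m" using gm cc bX by (simp add: field_simps)
          then have "piY $ m = 0" using R1[of m] by (simp add: algebra_simps)
          then show False using pY by simp
        qed
      qed
    qed
    have "ratio_set gY gX c = VXY"
      by (rule card_subset_eq[OF _ sub]) (use ge card_mono[OF _ sub] in auto)
    then show ?thesis using cc bX by simp
  next
    case noY: False
    have inpl: "piX $ k \<noteq> 0 \<and> piY $ k \<noteq> 0" if k: "k \<in> ratio_set gY gX c" for k
    proof -
      have gk: "gY $ k \<noteq> 0" "gX $ k / gY $ k = c" using k by (auto simp: rs_def')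
      have "piY $ k \<noteq> 0" using noY k by blast
      moreover have "piX $ k \<noteq> 0"
      proof
        assume "piX $ k = 0"
        then have "gX $ k = bYX * gY $ k" using R2[of k] by simp
        then have "c = bYX" using gk by (simp add: field_simps)
        then show False using False by simp
      qed
      ultimately show ?thesis by simp
    qed
    show ?thesis
    proof (cases "c = 0")
      case True
      have sub: "ratio_set gY gX c \<subseteq> Vpl - supp_set gX"
      proof
        fix k assume k: "k \<in> ratio_set gY gX c"
        then have "gX $ k = 0" using True by (auto simp: rs_def')
        then show "k \<in> Vpl - supp_set gX" using inpl[OF k] by (simp add: supp_set_def)
      qed
      have "bYX \<noteq> 0" using False True by simp
      then have "card (Vpl - supp_set gX) < card VXY" by (rule C3)
      moreover have "card (ratio_set gY gX c) \<le> card (Vpl - supp_set gX)" by (rule card_mono[OF _ sub]) simp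
      ultimately show ?thesis using ge by linarith
    next
      case c0: False
      have sub: "ratio_set gY gX c \<subseteq> {j \<in> Vpl \<inter> supp_set gX. piY $ j / gX $ j = 1 / c - bXY}"
      proof
        fix k assume k: "k \<in> ratio_set gY gX c"
        then have gk: "gY $ k \<noteq> 0" "gX $ k / gY $ k = c" by (auto simp: rs_def')
        then have gXk: "gX $ k = c * gY $ k" by (simp add: field_simps)
        then have nz: "gX $ k \<noteq> 0" using gk c0 by simp
        have "piY $ k / gX $ k = 1 / c - bXY"
          using R1[of k] gXk nz c0 gk by (simp add: field_simps)
        then show "k \<in> {j \<in> Vpl \<inter> supp_set gX. piY $ j / gX $ j = 1 / c - bXY}"
          using inpl[OF k] nz by (simp add: supp_set_def)
      qed
      have "card (ratio_set gY gX c) \<le> card {j \<in> Vpl \<inter> supp_set gX. piY $ j / gX $ j = 1 / c - bXY}"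
        by (rule card_mono[OF _ sub]) simp
      then show ?thesis using C1[of "1 / c - bXY"] ge by linarith
    qed
  qed
qed

lemma MODE_B:
  assumes bX: "bXY \<noteq> 0" and bY: "bYX \<noteq> 0"
  shows "(\<exists>!b. b \<in> mode_set gY gX) \<and> (THE b. b \<in> mode_set gY gX) = 1 / bXY"
proof -
  have sub: "VXY \<subseteq> ratio_set gY gX (1 / bXY)"
  proof
    fix k assume "k \<in> VXY"
    then have p: "piX $ k \<noteq> 0" "piY $ k = 0" by auto
    have "gX $ k \<noteq> 0" using p sv by (simp add: gXj)
    moreover have "gY $ k = bXY * gX $ k" using R1[of k] p by simp
    ultimately show "k \<in> ratio_set gY gX (1 / bXY)" using bX by (simp add: rs_def')
  qed
  have c1: "card VXY \<le> card (ratio_set gY gX (1 / bXY))" by (rule card_mono[OF _ sub]) simp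
  have le: "card (ratio_set gY gX c) \<le> card VXY" for c
  proof (rule ccontr)
    assume "\<not> ?thesis"
    then have g: "card VXY < card (ratio_set gY gX c)" by simp
    from B[of c] g show False using bY by auto
  qed
  have m: "1 / bXY \<in> mode_set gY gX" unfolding mode_set_def using le c1 by (blast intro: order_trans)
  have u: "b = 1 / bXY" if "b \<in> mode_set gY gX" for b
  proof -
    have "card (ratio_set gY gX (1 / bXY)) \<le> card (ratio_set gY gX b)" using that unfolding mode_set_def by simp
    then have "card VXY \<le> card (ratio_set gY gX b)" using c1 by linarith
    from B[OF this] show ?thesis using bY by auto
  qed
  have ex: "\<exists>!b. b \<in> mode_set gY gX" using m u by blast
  then show ?thesis using the1_equality[OF ex m] by simp
qed

end

lemma Bnorm_s:
  assumes "onorm (\<lambda>v. Bmat bXY bYX *v v) < 1"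
  shows "bXY * bYX \<noteq> 1"
proof -
  let ?f = "\<lambda>v. Bmat bXY bYX *v v"
  have bl: "bounded_linear ?f" by (simp add: matrix_vector_mul_bounded_linear)
  have e1: "(Bmat bXY bYX *v axis 2 1) $ 1 = bXY"
    by (simp add: Bmat_def matrix_vector_mult_def axis_def if_distrib[of "\<lambda>x. _ * x"] cong: if_cong)
  have e2: "(Bmat bXY bYX *v axis 1 1) $ 2 = bYX"
    by (simp add: Bmat_def matrix_vector_mult_def axis_def if_distrib[of "\<lambda>x. _ * x"] cong: if_cong)
  have "\<bar>bXY\<bar> \<le> onorm ?f"
    using component_le_norm_cart[of "Bmat bXY bYX *v axis 2 1" 1] onorm[OF bl, of "axis 2 1"] e1
    by simp
  moreover have "\<bar>bYX\<bar> \<le> onorm ?f"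
    using component_le_norm_cart[of "Bmat bXY bYX *v axis 1 1" 2] onorm[OF bl, of "axis 1 1"] e2
    by simp
  ultimately have a: "\<bar>bXY\<bar> < 1" "\<bar>bYX\<bar> < 1" using assms by linarith+
  have "\<bar>bXY\<bar> * \<bar>bYX\<bar> \<le> \<bar>bXY\<bar>" using a(2) mult_left_le_one_le[of "\<bar>bXY\<bar>" "\<bar>bYX\<bar>"] by (simp add: mult.commute)
  then have "\<bar>bXY * bYX\<bar> < 1" using a(1) by (simp add: abs_mult)
  then show ?thesis by auto
qed

lemma oPCH_fst: "\<exists>!b. b \<in> mode_set g h \<Longrightarrow> fst (oPCH M Z D D' g h) = ereal (THE b. b \<in> mode_set g h)"
  by (simp add: oPCH_def Let_def)
lemma oPCH_V: "\<exists>!b. b \<in> mode_set g h \<Longrightarrow> snd (snd (oPCH M Z D D' g h)) = ratio_set g h (THE b. b \<in> mode_set g h)"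
  by (simp add: oPCH_def Let_def)
lemma oPCH_nu: "\<not> (\<exists>!b. b \<in> mode_set g h) \<Longrightarrow> oPCH M Z D D' g h = (PInfty, PInfty, {})"
  by (simp add: oPCH_def)

lemma gam_swap: "gammaX bYX bXY piY piX = gammaY bXY bYX piX piY" "gammaY bYX bXY piY piX = gammaX bXY bYX piX piY"
  by (simp_all add: gammaX_def gammaY_def mult.commute)

lemma side1:
  assumes m: "model M MU X Y \<zeta> \<eta> Z U \<xi>Y \<xi>X bXY bYX piX piY"
    and c: "comb bXY bYX piX piY"
    and cov: "(\<chi> j. (\<integral>w. Y w * (\<xi>Y (U w) + \<zeta> w) * Z w $ j \<partial>M)
                 - (\<integral>w. Y w * (\<xi>Y (U w) + \<zeta> w) \<partial>M) * (\<integral>w. Z w $ j \<partial>M)) \<noteq> 0"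
  shows "oPCH M Z X Y (gammaX bXY bYX piX piY) (gammaY bXY bYX piX piY)
            = (ereal bXY, ereal bYX, {j. piX $ j \<noteq> 0 \<and> piY $ j = 0})"
proof -
  note sw = model.swap[OF m]
  note gsw = gam_swap[where bXY=bXY and bYX=bYX and piX=piX and piY=piY]
  note mA = comb.MODE_A[OF c]
  note e1 = model.EVAL1[OF m, OF conjunct1[OF mA] conjunct2[OF mA]]
  show ?thesis
    unfolding e1 comb.A1[OF c] using model.COV[OF m cov] by (simp only: if_True not_False_eq_True)
qed

lemma side2:
  assumes m: "model M MU X Y \<zeta> \<eta> Z U \<xi>Y \<xi>X bXY bYX piX piY"
    and c: "comb bXY bYX piX piY"
    and bX: "bXY \<noteq> 0" and bY: "bYX \<noteq> 0"
  shows "fst (oPCH M Z Y X (gammaY bXY bYX piX piY) (gammaX bXY bYX piX piY)) \<noteq> 0 \<and>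
            fst (snd (oPCH M Z Y X (gammaY bXY bYX piX piY) (gammaX bXY bYX piX piY))) \<noteq> 0"
proof -
  note sw = model.swap[OF m]
  note gsw = gam_swap[where bXY=bXY and bYX=bYX and piX=piX and piY=piY]
    note mb = comb.MODE_B[OF c bX bY]
    have u': "\<exists>!b. b \<in> mode_set (gammaX bYX bXY piY piX) (gammaY bYX bXY piY piX)"
      unfolding gsw by (rule conjunct1[OF mb])
    have t': "(THE b. b \<in> mode_set (gammaX bYX bXY piY piX) (gammaY bYX bXY piY piX)) = 1 / bXY"
      unfolding gsw by (rule conjunct2[OF mb])
    note e2 = model.EVAL2[OF sw bX u' t', unfolded gsw]
    have f: "fst (oPCH M Z Y X (gammaY bXY bYX piX piY) (gammaX bXY bYX piX piY)) = ereal (1 / bXY)"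
      using oPCH_fst[OF conjunct1[OF mb], of M Z Y X] conjunct2[OF mb] by simp
    show ?thesis using e2 f bX by simp
qed

lemma side3:
  assumes m: "model M MU X Y \<zeta> \<eta> Z U \<xi>Y \<xi>X bXY bYX piX piY"
    and c: "comb bXY bYX piX piY"
    and II: "oPCH M Z Y X (gammaY bXY bYX piX piY) (gammaX bXY bYX piX piY) = (p, q, V)"
    and pf: "p \<noteq> PInfty" and qf: "q \<noteq> PInfty"
    and cV: "card {j. piX $ j \<noteq> 0 \<and> piY $ j = 0} \<le> card V"
  shows "(p = ereal bYX \<and> q = ereal bXY \<and> bYX = 0) \<or>
            (card V = card {j. piX $ j \<noteq> 0 \<and> piY $ j = 0} \<and> bXY \<noteq> 0 \<and> bYX \<noteq> 0)"
proof -
  note sw = model.swap[OF m]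
  note gsw = gam_swap[where bXY=bXY and bYX=bYX and piX=piX and piY=piY]
  have u: "\<exists>!b. b \<in> mode_set (gammaY bXY bYX piX piY) (gammaX bXY bYX piX piY)"
  proof (rule ccontr)
    assume "\<not> ?thesis"
    from oPCH_nu[OF this, of M Z Y X] II pf show False by simp
  qed
  have u': "\<exists>!b. b \<in> mode_set (gammaX bYX bXY piY piX) (gammaY bYX bXY piY piX)"
    unfolding gsw by (rule u)
  define c0 where "c0 = (THE b. b \<in> mode_set (gammaY bXY bYX piX piY) (gammaX bXY bYX piX piY))"
  have t': "(THE b. b \<in> mode_set (gammaX bYX bXY piY piX) (gammaY bYX bXY piY piX)) = c0"
    unfolding gsw c0_def ..
  have p: "p = ereal c0" using oPCH_fst[OF u, of M Z Y X] II unfolding c0_def by simp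
  have V: "V = ratio_set (gammaY bXY bYX piX piY) (gammaX bXY bYX piX piY) c0"
    using oPCH_V[OF u, of M Z Y X] II unfolding c0_def by simp
  have cV': "card {j. piX $ j \<noteq> 0 \<and> piY $ j = 0} \<le> card (ratio_set (gammaY bXY bYX piX piY) (gammaX bXY bYX piX piY) c0)"
    using cV unfolding V .
  note cases = comb.B[OF c cV']
  show ?thesis
  proof (rule disjE[OF cases])
    assume a: "c0 = bYX \<and> bYX = 0"
    then have t'': "(THE b. b \<in> mode_set (gammaX bYX bXY piY piX) (gammaY bYX bXY piY piX)) = bYX"
      using t' by simp
    note e = model.EVAL1[OF sw u' t'', unfolded gsw]
    have "q = ereal bXY" using e II qf by (auto split: if_splits)
    then show ?thesis using a p by simp
  next
    assume a: "c0 = 1 / bXY \<and> bXY \<noteq> 0 \<and> ratio_set (gammaY bXY bYX piX piY) (gammaX bXY bYX piX piY) c0 = {j. piX $ j \<noteq> 0 \<and> piY $ j = 0}"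
    then have t'': "(THE b. b \<in> mode_set (gammaX bYX bXY piY piX) (gammaY bYX bXY piY piX)) = 1 / bXY"
      using t' by simp
    note e = model.EVAL2[OF sw conjunct1[OF conjunct2[OF a]] u' t'', unfolded gsw]
    have bY: "bYX \<noteq> 0" using e II qf by simp
    have VV: "V = {j. piX $ j \<noteq> 0 \<and> piY $ j = 0}" using V a by metis
    show ?thesis using VV a bY by simp
  qed
qed

lemma ereal_abs_pos: "(0::ereal) < \<bar>x\<bar> \<longleftrightarrow> x \<noteq> 0" by (cases x) auto

lemma max_inf: "max x y = (\<infinity>::ereal) \<longleftrightarrow> x = \<infinity> \<or> y = \<infinity>" by (auto simp: max_def)

lemma Hc_two:
  assumes "a1 \<noteq> 0" "a2 \<noteq> 0" "b1 \<noteq> 0" "b2 \<noteq> 0"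
  shows "H_circ a1 a2 b2 b1 V W = Some 2"
proof -
  have "0 < Min {\<bar>a1\<bar>, \<bar>a2\<bar>, \<bar>b2\<bar>, \<bar>b1\<bar>}"
    using assms by (simp add: ereal_abs_pos)
  then show ?thesis unfolding H_circ_def Let_def by (simp add: case_prod_unfold)
qed

lemma Hc_other:
  assumes z: "bXY * bYX = 0" and bc: "beta_circ a1 a2 V b2 b1 W = (ereal bXY, ereal bYX)"
    and zero: "0 \<in> {\<bar>a1\<bar>, \<bar>a2\<bar>, \<bar>b2\<bar>, \<bar>b1\<bar>}"
  shows "H_circ a1 a2 b2 b1 V W = Some (H_true bXY bYX)"
proof -
  have "Min {\<bar>a1\<bar>, \<bar>a2\<bar>, \<bar>b2\<bar>, \<bar>b1\<bar>} \<le> 0"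
    using Min_le[OF _ zero] by simp
  then have "\<not> 0 < Min {\<bar>a1\<bar>, \<bar>a2\<bar>, \<bar>b2\<bar>, \<bar>b1\<bar>}" by (simp only: not_less)
  then show ?thesis unfolding H_circ_def Let_def bc using z by (auto simp: H_true_def)
qed

lemma final_A:
  assumes I: "a1 = ereal bXY" "a2 = ereal bYX" "a3 = VA"
    and G2: "bXY \<noteq> 0 \<Longrightarrow> bYX \<noteq> 0 \<Longrightarrow> b1 \<noteq> 0 \<and> b2 \<noteq> 0"
    and G3: "b1 \<noteq> PInfty \<Longrightarrow> b2 \<noteq> PInfty \<Longrightarrow> card VA \<le> card b3 \<Longrightarrow>
       (b1 = ereal bYX \<and> b2 = ereal bXY \<and> bYX = 0) \<or> (card b3 = card VA \<and> bXY \<noteq> 0 \<and> bYX \<noteq> 0)"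
  shows "H_circ a1 a2 b2 b1 a3 b3 = Some (H_true bXY bYX)"
proof (cases "bXY \<noteq> 0 \<and> bYX \<noteq> 0")
  case True
  then have "H_circ a1 a2 b2 b1 a3 b3 = Some 2" using G2 I by (intro Hc_two) auto
  then show ?thesis using True by (simp add: H_true_def)
next
  case False
  then have z: "bXY * bYX = 0" by simp
  have bc: "beta_circ a1 a2 a3 b2 b1 b3 = (ereal bXY, ereal bYX)"
  proof -
    consider "max b2 b1 = \<infinity>" | "max b2 b1 \<noteq> \<infinity>" "card b3 \<le> card a3" | "max b2 b1 \<noteq> \<infinity>" "\<not> card b3 \<le> card a3"
      by blast
    then show ?thesis
    proof cases
      case 1 then show ?thesis unfolding beta_circ_def using I by (simp add: max_inf)
    next
      case 2 then show ?thesis unfolding beta_circ_def using I by (simp add: max_inf)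
    next
      case 3
      then have f: "b1 \<noteq> PInfty" "b2 \<noteq> PInfty" by (auto simp: max_inf)
      have "card VA \<le> card b3" using 3 I by simp
      from G3[OF f this] 3 I have "b1 = ereal bYX \<and> b2 = ereal bXY" by auto
      then show ?thesis unfolding beta_circ_def using I 3 by (simp add: max_inf)
    qed
  qed
  have zero: "0 \<in> {\<bar>a1\<bar>, \<bar>a2\<bar>, \<bar>b2\<bar>, \<bar>b1\<bar>}" using False I by auto
  show ?thesis by (rule Hc_other[OF z bc zero])
qed

lemma final_A':
  assumes II: "b1 = ereal bYX" "b2 = ereal bXY" "b3 = VB"
    and G2: "bXY \<noteq> 0 \<Longrightarrow> bYX \<noteq> 0 \<Longrightarrow> a1 \<noteq> 0 \<and> a2 \<noteq> 0"
    and G3: "a1 \<noteq> PInfty \<Longrightarrow> a2 \<noteq> PInfty \<Longrightarrow> card VB \<le> card a3 \<Longrightarrow>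
       (a1 = ereal bXY \<and> a2 = ereal bYX \<and> bXY = 0) \<or> (card a3 = card VB \<and> bYX \<noteq> 0 \<and> bXY \<noteq> 0)"
  shows "H_circ a1 a2 b2 b1 a3 b3 = Some (H_true bXY bYX)"
proof (cases "bXY \<noteq> 0 \<and> bYX \<noteq> 0")
  case True
  then have "H_circ a1 a2 b2 b1 a3 b3 = Some 2" using G2 II by (intro Hc_two) auto
  then show ?thesis using True by (simp add: H_true_def)
next
  case False
  then have z: "bXY * bYX = 0" by simp
  have bc: "beta_circ a1 a2 a3 b2 b1 b3 = (ereal bXY, ereal bYX)"
  proof -
    consider "max a1 a2 = \<infinity>" | "max a1 a2 \<noteq> \<infinity>" "card b3 \<le> card a3" | "max a1 a2 \<noteq> \<infinity>" "\<not> card b3 \<le> card a3"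
      by blast
    then show ?thesis
    proof cases
      case 1 then show ?thesis unfolding beta_circ_def using II by (simp add: max_inf)
    next
      case 2
      then have f: "a1 \<noteq> PInfty" "a2 \<noteq> PInfty" by (auto simp: max_inf)
      have "card VB \<le> card a3" using 2 II by simp
      from G3[OF f this] False have "a1 = ereal bXY \<and> a2 = ereal bYX" by auto
      then show ?thesis unfolding beta_circ_def using II 2 by (simp add: max_inf)
    next
      case 3 then show ?thesis unfolding beta_circ_def using II by (simp add: max_inf)
    qed
  qed
  have zero: "0 \<in> {\<bar>a1\<bar>, \<bar>a2\<bar>, \<bar>b2\<bar>, \<bar>b1\<bar>}" using False II by auto
  show ?thesis by (rule Hc_other[OF z bc zero])
qed

theorem theorem3:
  fixes M :: "'a measure" and MU :: "'u measure"
    and X Y \<zeta> \<eta> :: "'a \<Rightarrow> real" and Z :: "'a \<Rightarrow> real^'p" and U :: "'a \<Rightarrow> 'u"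
    and \<xi>Y \<xi>X :: "'u \<Rightarrow> real"
    and bXY bYX :: real and piX piY :: "real^'p"
  assumes P: "prob_space M"
    and meas: "X \<in> borel_measurable M" "Y \<in> borel_measurable M" "Z \<in> borel_measurable M"
              "\<zeta> \<in> borel_measurable M" "\<eta> \<in> borel_measurable M" "U \<in> measurable M MU"
              "\<xi>Y \<in> borel_measurable MU" "\<xi>X \<in> borel_measurable MU"
    and finvar: "integrable M (\<lambda>w. (X w)\<^sup>2)" "integrable M (\<lambda>w. (Y w)\<^sup>2)"
    and Zsq: "\<And>j. integrable M (\<lambda>w. (Z w $ j)\<^sup>2)"
    and means: "integral\<^sup>L M X = 0" "integral\<^sup>L M Y = 0" "\<And>j. integral\<^sup>L M (\<lambda>w. Z w $ j) = 0"
    and Sig_inv: "invertible (Sig M Z)"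
    and eqY: "\<And>w. w \<in> space M \<Longrightarrow> Y w = bXY * X w + piY \<bullet> Z w + \<xi>Y (U w) + \<zeta> w"
    and eqX: "\<And>w. w \<in> space M \<Longrightarrow> X w = bYX * Y w + piX \<bullet> Z w + \<xi>X (U w) + \<eta> w"
    and xi_int: "integrable M (\<lambda>w. \<xi>Y (U w))" "integrable M (\<lambda>w. \<xi>X (U w))"
    and xi_mean: "integral\<^sup>L M (\<lambda>w. \<xi>Y (U w)) = 0" "integral\<^sup>L M (\<lambda>w. \<xi>X (U w)) = 0"
    and indep: "prob_space.indep_set M {Z -` A \<inter> space M | A. A \<in> sets borel}
                                       {U -` B \<inter> space M | B. B \<in> sets MU}"
    and err_int: "integrable M \<zeta>" "integrable M \<eta>"
    and cond_zeta: "AE w in M. real_cond_exp M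
          (vimage_algebra (space M) (\<lambda>w. (\<eta> w, Z w, U w)) (borel \<Otimes>\<^sub>M (borel \<Otimes>\<^sub>M MU))) \<zeta> w = 0"
    and cond_eta: "AE w in M. real_cond_exp M
          (vimage_algebra (space M) (\<lambda>w. (\<zeta> w, Z w, U w)) (borel \<Otimes>\<^sub>M (borel \<Otimes>\<^sub>M MU))) \<eta> w = 0"
    and Bnorm: "onorm (\<lambda>v. Bmat bXY bYX *v v) < 1"
    and moments: "\<And>j. integrable M (\<lambda>w. X w * X w * Z w $ j)"
                 "\<And>j. integrable M (\<lambda>w. X w * Y w * Z w $ j)"
                 "\<And>j. integrable M (\<lambda>w. Y w * Y w * Z w $ j)"
                 "\<And>j k. integrable M (\<lambda>w. Z w $ k * X w * Z w $ j)"
                 "\<And>j k. integrable M (\<lambda>w. Z w $ k * Y w * Z w $ j)"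
    and AorA': "assmA M Z Y (\<lambda>w. \<xi>Y (U w) + \<zeta> w) bYX piX piY (gammaX bXY bYX piX piY)
              \<or> assmA M Z X (\<lambda>w. \<xi>X (U w) + \<eta> w) bXY piY piX (gammaY bXY bYX piX piY)"
  shows "(let gX = gammaX bXY bYX piX piY; gY = gammaY bXY bYX piX piY;
              (bXY_I, bYX_I, V_I) = oPCH M Z X Y gX gY;
              (bYX_II, bXY_II, V_II) = oPCH M Z Y X gY gX
          in H_circ bXY_I bYX_I bXY_II bYX_II V_I V_II = Some (H_true bXY bYX))"
proof -
  have s: "bXY * bYX \<noteq> 1" by (rule Bnorm_s[OF Bnorm])
  have m: "model M MU X Y \<zeta> \<eta> Z U \<xi>Y \<xi>X bXY bYX piX piY"
    by (rule model.intro) (fact | rule s)+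
  note sw = model.swap[OF m]
  note gsw = gam_swap[where bXY=bXY and bYX=bYX and piX=piX and piY=piY]
  obtain a1 a2 a3 where I: "oPCH M Z X Y (gammaX bXY bYX piX piY) (gammaY bXY bYX piX piY) = (a1, a2, a3)"
    by (metis prod_cases3)
  obtain b1 b2 b3 where II: "oPCH M Z Y X (gammaY bXY bYX piX piY) (gammaX bXY bYX piX piY) = (b1, b2, b3)"
    by (metis prod_cases3)
  have main: "H_circ a1 a2 b2 b1 a3 b3 = Some (H_true bXY bYX)"
  proof (rule disjE[OF AorA'])
    assume A: "assmA M Z Y (\<lambda>w. \<xi>Y (U w) + \<zeta> w) bYX piX piY (gammaX bXY bYX piX piY)"
    have c: "comb bXY bYX piX piY" by (rule comb.intro[OF s assmA_cardA[OF A]])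
    have cov: "(\<chi> j. (\<integral>w. Y w * (\<xi>Y (U w) + \<zeta> w) * Z w $ j \<partial>M)
                 - (\<integral>w. Y w * (\<xi>Y (U w) + \<zeta> w) \<partial>M) * (\<integral>w. Z w $ j \<partial>M)) \<noteq> 0"
      using A unfolding assmA_def Let_def by blast
    note s1 = side1[OF m c cov]
    show ?thesis
    proof (rule final_A)
      show "a1 = ereal bXY" "a2 = ereal bYX" "a3 = {j. piX $ j \<noteq> 0 \<and> piY $ j = 0}" using s1 I by simp_all
      show "b1 \<noteq> 0 \<and> b2 \<noteq> 0" if "bXY \<noteq> 0" "bYX \<noteq> 0" using side2[OF m c that] II by simp
      show "(b1 = ereal bYX \<and> b2 = ereal bXY \<and> bYX = 0) \<or>
          (card b3 = card {j. piX $ j \<noteq> 0 \<and> piY $ j = 0} \<and> bXY \<noteq> 0 \<and> bYX \<noteq> 0)"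
        if "b1 \<noteq> PInfty" "b2 \<noteq> PInfty" "card {j. piX $ j \<noteq> 0 \<and> piY $ j = 0} \<le> card b3"
        by (rule side3[OF m c II that])
    qed
  next
    assume A: "assmA M Z X (\<lambda>w. \<xi>X (U w) + \<eta> w) bXY piY piX (gammaY bXY bYX piX piY)"
    have s': "bYX * bXY \<noteq> 1" using s by (simp add: mult.commute)
    have ca: "cardA bXY piY piX (gammaX bYX bXY piY piX)" using assmA_cardA[OF A] unfolding gsw .
    have c: "comb bYX bXY piY piX" by (rule comb.intro[OF s' ca])
    have cov: "(\<chi> j. (\<integral>w. X w * (\<xi>X (U w) + \<eta> w) * Z w $ j \<partial>M)
                 - (\<integral>w. X w * (\<xi>X (U w) + \<eta> w) \<partial>M) * (\<integral>w. Z w $ j \<partial>M)) \<noteq> 0"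
      using A unfolding assmA_def Let_def by blast
    note s1 = side1[OF sw c cov, unfolded gsw]
    show ?thesis
    proof (rule final_A')
      show "b1 = ereal bYX" "b2 = ereal bXY" "b3 = {j. piY $ j \<noteq> 0 \<and> piX $ j = 0}" using s1 II by simp_all
      show "a1 \<noteq> 0 \<and> a2 \<noteq> 0" if "bXY \<noteq> 0" "bYX \<noteq> 0"
        using side2[OF sw c that(2) that(1), unfolded gsw] I by simp
      have I': "oPCH M Z X Y (gammaY bYX bXY piY piX) (gammaX bYX bXY piY piX) = (a1, a2, a3)"
        unfolding gsw by (rule I)
      show "(a1 = ereal bXY \<and> a2 = ereal bYX \<and> bXY = 0) \<or>
          (card a3 = card {j. piY $ j \<noteq> 0 \<and> piX $ j = 0} \<and> bYX \<noteq> 0 \<and> bXY \<noteq> 0)"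
        if "a1 \<noteq> PInfty" "a2 \<noteq> PInfty" "card {j. piY $ j \<noteq> 0 \<and> piX $ j = 0} \<le> card a3"
        by (rule side3[OF sw c I' that])
    qed
  qed
  show ?thesis using main I II by (simp add: Let_def)
qed


end
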